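(* Let $\mathbf g$ be a two-species local jump rate and let $\{\mu_0^N\}$, $\mu_0^N$ a probability measure on $(\mathbb N_0^2)^{\mathbb T_N^d}$, be an entropy local equilibrium of a profile $\boldsymbol\rho\in C(\mathbb T^d;\mathbf R(\mathcal D_{\mathbf R}^o))$. Then for some (equivalently, every) $\mathbf a\in\mathbf R(\mathcal D_{\mathbf R}^o)\cap(0,\infty)^2$, $$\limsup_{N\to\infty}\frac1{N^d}\mathcal H(\mu_0^N\,|\,\nu^N_{\mathbf a})<+\infty.$$
   Context: A two-species local jump rate is $\mathbf g=(g_1,g_2):\mathbb N_0^2\to\mathbb R_+^2$ with $g_i(\mathbf k)=0$ iff $k_i=0$, $\sup_{\mathbf k}|g_i(\mathbf k+\mathbf e_i)-g_i(\mathbf k)|<\infty$, $g_1(\mathbf k)g_2(\mathbf k-\mathbf e_1)=g_1(\mathbf k-\mathbf e_2)g_2(\mathbf k)$ for $k_1,k_2\ge1$, and $\liminf_{|\mathbf k|_1\to\infty}\mathbf g!(\mathbf k)^{1/|\mathbf k|_1}>0$, where $\mathbf g!(\mathbf k)$ is the product of $g_{i_\ell}(\gamma(\ell))$ along any increasing unit-step lattice path $\gamma$ from $0$ to $\mathbf k$, $\mathbf g!(\mathbf 0)=1$. $Z(\boldsymbol\varphi)=\sum_{\mathbf k}\varphi_1^{k_1}\varphi_2^{k_2}/\mathbf g!(\mathbf k)$, $\mathcal D_Z=\{Z<\infty\}\subset\mathbb R_+^2$; $\bar\nu^1_{\boldsymbol\varphi}(\mathbf k)=\boldsymbol\varphi^{\mathbf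 k}/(Z(\boldsymbol\varphi)\mathbf g!(\mathbf k))$; $\mathbf R(\boldsymbol\varphi)=\sum_{\mathbf k}\mathbf k\bar\nu^1_{\boldsymbol\varphi}(\mathbf k)$; $\mathcal D_{\mathbf R}=\{\boldsymbol\varphi\in\mathcal D_Z:\mathbf R(\boldsymbol\varphi)\in\mathbb R_+^2\}$, interior ${}^o$ relative to $\mathbb R_+^2$; $\boldsymbol\Phi=\mathbf R^{-1}$ on $\mathbf R(\mathcal D_{\mathbf R})$. $\nu^1_{\boldsymbol\rho}=\bar\nu^1_{\boldsymbol\Phi(\boldsymbol\rho)}$, $\nu^N_{\mathbf a}=\bigotimes_{x\in\mathbb T_N^d}\nu^1_{\mathbf a}$, and $\nu^N_{\boldsymbol\rho(\cdot)}=\bigotimes_x\nu^1_{\boldsymbol\rho(x/N)}$. An entropy local equilibrium of profile $\boldsymbol\rho(\cdot)$ is a sequence with $\limsup_N N^{-d}\mathcal H(\mu^N|\nu^N_{\boldsymbol\rho(\cdot)})=0$, $\mathcal H$ the relative entropy. *)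

theory Defs
  imports "HOL-Probability.Probability"
begin

text \<open>The rate g = (g1, g2) is given by two functions on pairs (k1,k2).
  g!(k) is computed along the increasing path that first raises k1 and then k2
  (path independence follows from the commutativity condition).\<close>

definition gfact :: "(nat \<times> nat \<Rightarrow> real) \<Rightarrow> (nat \<times> nat \<Rightarrow> real) \<Rightarrow> nat \<times> nat \<Rightarrow> real" where
  "gfact g1 g2 k = (\<Prod>j\<in>{1..fst k}. g1 (j, 0)) * (\<Prod>l\<in>{1..snd k}. g2 (fst k, l))"

definition local_jump_rate :: "(nat \<times> nat \<Rightarrow> real) \<Rightarrow> (nat \<times> nat \<Rightarrow> real) \<Rightarrow> bool" where
  "local_jump_rate g1 g2 \<longleftrightarrow>
     (\<forall>k. g1 k \<ge> 0 \<and> g2 k \<ge> 0) \<and>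
     (\<forall>k. g1 k = 0 \<longleftrightarrow> fst k = 0) \<and>
     (\<forall>k. g2 k = 0 \<longleftrightarrow> snd k = 0) \<and>
     (\<exists>C. \<forall>k1 k2. \<bar>g1 (k1 + 1, k2) - g1 (k1, k2)\<bar> \<le> C) \<and>
     (\<exists>C. \<forall>k1 k2. \<bar>g2 (k1, k2 + 1) - g2 (k1, k2)\<bar> \<le> C) \<and>
     (\<forall>k1 k2. k1 \<ge> 1 \<longrightarrow> k2 \<ge> 1 \<longrightarrow>
         g1 (k1, k2) * g2 (k1 - 1, k2) = g1 (k1, k2 - 1) * g2 (k1, k2)) \<and>
     Liminf cofinite (\<lambda>k. ereal (gfact g1 g2 k powr (1 / real (fst k + snd k)))) > 0"

definition Rplus2 :: "(real \<times> real) set" where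
  "Rplus2 = {\<phi>. fst \<phi> \<ge> 0 \<and> snd \<phi> \<ge> 0}"

definition Zterm :: "(nat \<times> nat \<Rightarrow> real) \<Rightarrow> (nat \<times> nat \<Rightarrow> real) \<Rightarrow> real \<times> real \<Rightarrow> nat \<times> nat \<Rightarrow> real" where
  "Zterm g1 g2 \<phi> k = fst \<phi> ^ fst k * snd \<phi> ^ snd k / gfact g1 g2 k"

definition Zfun :: "(nat \<times> nat \<Rightarrow> real) \<Rightarrow> (nat \<times> nat \<Rightarrow> real) \<Rightarrow> real \<times> real \<Rightarrow> real" where
  "Zfun g1 g2 \<phi> = (\<Sum>\<^sub>\<infinity>k. Zterm g1 g2 \<phi> k)"

definition DZ :: "(nat \<times> nat \<Rightarrow> real) \<Rightarrow> (nat \<times> nat \<Rightarrow> real) \<Rightarrow> (real \<times> real) set" where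
  "DZ g1 g2 = {\<phi> \<in> Rplus2. Zterm g1 g2 \<phi> summable_on UNIV}"

definition nubar1 :: "(nat \<times> nat \<Rightarrow> real) \<Rightarrow> (nat \<times> nat \<Rightarrow> real) \<Rightarrow> real \<times> real \<Rightarrow> nat \<times> nat \<Rightarrow> real" where
  "nubar1 g1 g2 \<phi> k = Zterm g1 g2 \<phi> k / Zfun g1 g2 \<phi>"

definition Rfun :: "(nat \<times> nat \<Rightarrow> real) \<Rightarrow> (nat \<times> nat \<Rightarrow> real) \<Rightarrow> real \<times> real \<Rightarrow> real \<times> real" where
  "Rfun g1 g2 \<phi> = ((\<Sum>\<^sub>\<infinity>k. real (fst k) * nubar1 g1 g2 \<phi> k),
                   (\<Sum>\<^sub>\<infinity>k. real (snd k) * nubar1 g1 g2 \<phi> k))"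

definition DR :: "(nat \<times> nat \<Rightarrow> real) \<Rightarrow> (nat \<times> nat \<Rightarrow> real) \<Rightarrow> (real \<times> real) set" where
  "DR g1 g2 = {\<phi> \<in> DZ g1 g2.
      (\<lambda>k. real (fst k) * nubar1 g1 g2 \<phi> k) summable_on UNIV \<and>
      (\<lambda>k. real (snd k) * nubar1 g1 g2 \<phi> k) summable_on UNIV}"

definition DR_int :: "(nat \<times> nat \<Rightarrow> real) \<Rightarrow> (nat \<times> nat \<Rightarrow> real) \<Rightarrow> (real \<times> real) set" where
  "DR_int g1 g2 = {\<phi> \<in> Rplus2. \<exists>U. open U \<and> \<phi> \<in> U \<and> U \<inter> Rplus2 \<subseteq> DR g1 g2}"

definition Phi :: "(nat \<times> nat \<Rightarrow> real) \<Rightarrow> (nat \<times> nat \<Rightarrow> real) \<Rightarrow> real \<times> real \<Rightarrow> real \<times> real" where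
  "Phi g1 g2 \<rho> = (THE \<phi>. \<phi> \<in> DR g1 g2 \<and> Rfun g1 g2 \<phi> = \<rho>)"

definition nu1 :: "(nat \<times> nat \<Rightarrow> real) \<Rightarrow> (nat \<times> nat \<Rightarrow> real) \<Rightarrow> real \<times> real \<Rightarrow> nat \<times> nat \<Rightarrow> real" where
  "nu1 g1 g2 \<rho> = nubar1 g1 g2 (Phi g1 g2 \<rho>)"

text \<open>T_N^d = sites x :: 'd \<Rightarrow> nat with 0 \<le> x i < N; configurations are maps
  from sites to N_0^2, extended by (0,0) outside the torus.\<close>

definition sites :: "nat \<Rightarrow> ('d::finite \<Rightarrow> nat) set" where
  "sites N = {x. \<forall>i. x i < N}"

definition configs :: "nat \<Rightarrow> (('d::finite \<Rightarrow> nat) \<Rightarrow> nat \<times> nat) set" where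
  "configs N = {\<eta>. \<forall>x. x \<notin> sites N \<longrightarrow> \<eta> x = (0, 0)}"

definition scaled_site :: "nat \<Rightarrow> ('d::finite \<Rightarrow> nat) \<Rightarrow> real ^ 'd" where
  "scaled_site N x = (\<chi> i. real (x i) / real N)"

definition nuN_prof :: "(nat \<times> nat \<Rightarrow> real) \<Rightarrow> (nat \<times> nat \<Rightarrow> real) \<Rightarrow> (real ^ 'd \<Rightarrow> real \<times> real)
     \<Rightarrow> nat \<Rightarrow> (('d::finite \<Rightarrow> nat) \<Rightarrow> nat \<times> nat) \<Rightarrow> real" where
  "nuN_prof g1 g2 \<rho> N \<eta> =
     (if \<eta> \<in> configs N then (\<Prod>x\<in>sites N. nu1 g1 g2 (\<rho> (scaled_site N x)) (\<eta> x)) else 0)"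

definition nuN_const :: "(nat \<times> nat \<Rightarrow> real) \<Rightarrow> (nat \<times> nat \<Rightarrow> real) \<Rightarrow> real \<times> real
     \<Rightarrow> nat \<Rightarrow> (('d::finite \<Rightarrow> nat) \<Rightarrow> nat \<times> nat) \<Rightarrow> real" where
  "nuN_const g1 g2 a N \<eta> =
     (if \<eta> \<in> configs N then (\<Prod>x\<in>sites N. nu1 g1 g2 a (\<eta> x)) else 0)"

text \<open>H(mu|nu) = sum_eta mu(eta) log(mu(eta)/nu(eta)) if mu << nu, and +infinity otherwise;
  the sum is taken as (sum of positive parts) - (sum of negative parts) in the extended reals.\<close>
definition rel_entropy :: "'a pmf \<Rightarrow> ('a \<Rightarrow> real) \<Rightarrow> ereal" where
  "rel_entropy \<mu> \<nu> =
     (if \<forall>\<eta>. pmf \<mu> \<eta> > 0 \<longrightarrow> \<nu> \<eta> > 0 then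
        enn2ereal (\<integral>\<^sup>+ \<eta>. ennreal (max 0 (pmf \<mu> \<eta> * ln (pmf \<mu> \<eta> / \<nu> \<eta>))) \<partial>count_space (set_pmf \<mu>))
      - enn2ereal (\<integral>\<^sup>+ \<eta>. ennreal (max 0 (- (pmf \<mu> \<eta> * ln (pmf \<mu> \<eta> / \<nu> \<eta>)))) \<partial>count_space (set_pmf \<mu>))
      else \<infinity>)"

definition torus_profile :: "(real ^ 'd::finite \<Rightarrow> real \<times> real) \<Rightarrow> bool" where
  "torus_profile \<rho> \<longleftrightarrow> continuous_on UNIV \<rho> \<and> (\<forall>x i. \<rho> (x + axis i 1) = \<rho> x)"

definition entropy_local_equilibrium ::
  "(nat \<times> nat \<Rightarrow> real) \<Rightarrow> (nat \<times> nat \<Rightarrow> real) \<Rightarrow> (real ^ 'd \<Rightarrow> real \<times> real)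
     \<Rightarrow> (nat \<Rightarrow> (('d::finite \<Rightarrow> nat) \<Rightarrow> nat \<times> nat) pmf) \<Rightarrow> bool" where
  "entropy_local_equilibrium g1 g2 \<rho> \<mu> \<longleftrightarrow>
     limsup (\<lambda>N. rel_entropy (\<mu> N) (nuN_prof g1 g2 \<rho> N) / ereal (real N ^ CARD('d))) = 0"

end

theory Submission
  imports Defs "HOL-Homology.Invariance_of_Domain"
begin


context
  fixes g1 g2 :: "nat \<times> nat \<Rightarrow> real"
  assumes lj: "local_jump_rate g1 g2"
begin

lemma g1_pos: "fst k > 0 \<Longrightarrow> g1 k > 0"
  using lj unfolding local_jump_rate_def by (metis less_le not_gr0)

lemma g2_pos: "snd k > 0 \<Longrightarrow> g2 k > 0"
  using lj unfolding local_jump_rate_def by (metis less_le not_gr0)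

lemma gfact_pos: "gfact g1 g2 k > 0"
  unfolding gfact_def
  by (intro mult_pos_pos prod_pos) (auto intro!: g1_pos g2_pos)

lemma gfact_00: "gfact g1 g2 (0,0) = 1" by (simp add: gfact_def)
lemma gfact_10: "gfact g1 g2 (1,0) = g1 (1,0)" by (simp add: gfact_def)
lemma gfact_01: "gfact g1 g2 (0,1) = g2 (0,1)" by (simp add: gfact_def)

lemma Zterm_nonneg: "\<phi> \<in> Rplus2 \<Longrightarrow> Zterm g1 g2 \<phi> k \<ge> 0"
  unfolding Zterm_def Rplus2_def using gfact_pos[of k] by auto

lemma Zterm_00: "Zterm g1 g2 \<phi> (0,0) = 1"
  unfolding Zterm_def by (simp add: gfact_00)

lemma Zterm_mono:
  assumes "0 \<le> fst \<psi>" "fst \<psi> \<le> fst \<phi>" "0 \<le> snd \<psi>" "snd \<psi> \<le> snd \<phi>"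
  shows "Zterm g1 g2 \<psi> k \<le> Zterm g1 g2 \<phi> k"
  unfolding Zterm_def using gfact_pos[of k] assms
  by (intro divide_right_mono mult_mono power_mono) auto

lemma Zterm_scale:
  "Zterm g1 g2 (s * fst \<phi>, s * snd \<phi>) k = s ^ (fst k + snd k) * Zterm g1 g2 \<phi> k"
  unfolding Zterm_def by (simp add: power_mult_distrib power_add field_simps)

lemma Z_ge_term:
  assumes "\<phi> \<in> DZ g1 g2"
  shows "Zterm g1 g2 \<phi> k \<le> Zfun g1 g2 \<phi>"
proof -
  have "infsum (Zterm g1 g2 \<phi>) {k} \<le> infsum (Zterm g1 g2 \<phi>) UNIV"
    using assms by (intro infsum_mono_neutral) (auto simp: DZ_def Zterm_nonneg)
  then show ?thesis by (simp add: Zfun_def)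
qed

lemma Z_ge1: "\<phi> \<in> DZ g1 g2 \<Longrightarrow> Zfun g1 g2 \<phi> \<ge> 1"
  using Z_ge_term[of \<phi> "(0,0)"] by (simp add: Zterm_00)

lemma DZ_mono:
  assumes "\<phi> \<in> DZ g1 g2" "0 \<le> fst \<psi>" "fst \<psi> \<le> fst \<phi>" "0 \<le> snd \<psi>" "snd \<psi> \<le> snd \<phi>"
  shows "\<psi> \<in> DZ g1 g2" "Zfun g1 g2 \<psi> \<le> Zfun g1 g2 \<phi>"
proof -
  have s: "Zterm g1 g2 \<phi> summable_on UNIV" using assms(1) by (simp add: DZ_def)
  have p: "\<psi> \<in> Rplus2" using assms by (simp add: Rplus2_def)
  have s2: "Zterm g1 g2 \<psi> summable_on UNIV"
    by (rule summable_on_comparison_test[OF s]) (use assms p in \<open>auto intro: Zterm_mono Zterm_nonneg\<close>)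
  then show "\<psi> \<in> DZ g1 g2" using p by (simp add: DZ_def)
  show "Zfun g1 g2 \<psi> \<le> Zfun g1 g2 \<phi>"
    unfolding Zfun_def by (rule infsum_mono[OF s2 s]) (use assms in \<open>auto intro: Zterm_mono\<close>)
qed

lemma nubar_nonneg: "\<phi> \<in> Rplus2 \<Longrightarrow> nubar1 g1 g2 \<phi> k \<ge> 0"
  unfolding nubar1_def Zfun_def
  by (intro divide_nonneg_nonneg Zterm_nonneg infsum_nonneg) (auto simp: Zterm_nonneg)

lemma Z_has_sum: "\<phi> \<in> DZ g1 g2 \<Longrightarrow> (Zterm g1 g2 \<phi> has_sum Zfun g1 g2 \<phi>) UNIV"
  by (auto simp: DZ_def Zfun_def)

lemma nubar_has_sum: "\<phi> \<in> DZ g1 g2 \<Longrightarrow> (nubar1 g1 g2 \<phi> has_sum 1) UNIV"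
  using has_sum_divide_const[OF Z_has_sum, of \<phi> "Zfun g1 g2 \<phi>"] Z_ge1[of \<phi>]
  by (simp add: nubar1_def[abs_def])

lemma nubar_summable: "\<phi> \<in> DZ g1 g2 \<Longrightarrow> nubar1 g1 g2 \<phi> summable_on UNIV"
  using nubar_has_sum has_sum_imp_summable by blast

lemma nubar_sum: "\<phi> \<in> DZ g1 g2 \<Longrightarrow> infsum (nubar1 g1 g2 \<phi>) UNIV = 1"
  using nubar_has_sum infsumI by blast

end


lemma lnmon_nonneg: "(x::real) > 0 \<Longrightarrow> y > 0 \<Longrightarrow> (x - y) * (ln x - ln y) \<ge> 0"
proof (cases "x \<le> y")
  case True
  assume "x > 0" "y > 0"
  then have "ln x \<le> ln y" using True by simp
  then show ?thesis using True by (intro mult_nonpos_nonpos) auto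
next
  case False
  assume "x > 0" "y > 0"
  then have "ln y \<le> ln x" using False by simp
  then show ?thesis using False by (intro mult_nonneg_nonneg) auto
qed
lemma lnmon_pos: "(x::real) > 0 \<Longrightarrow> y > 0 \<Longrightarrow> x \<noteq> y \<Longrightarrow> (x - y) * (ln x - ln y) > 0"
proof (cases "x < y")
  case True
  assume "x > 0" "y > 0"
  then have "ln x < ln y" using True by simp
  then show ?thesis using True by (intro mult_neg_neg) auto
next
  case False
  assume "x > 0" "y > 0" "x \<noteq> y"
  then have "ln y < ln x" using False by simp
  then show ?thesis using False \<open>x \<noteq> y\<close> by (intro mult_pos_pos) auto
qed

context
  fixes g1 g2 :: "nat \<times> nat \<Rightarrow> real"
  assumes lj: "local_jump_rate g1 g2"
begin

lemma R1_has_sum: "\<phi> \<in> DR g1 g2 \<Longrightarrow> ((\<lambda>k. real (fst k) * nubar1 g1 g2 \<phi> k) has_sum fst (Rfun g1 g2 \<phi>)) UNIV"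
  by (auto simp: DR_def Rfun_def)

lemma R2_has_sum: "\<phi> \<in> DR g1 g2 \<Longrightarrow> ((\<lambda>k. real (snd k) * nubar1 g1 g2 \<phi> k) has_sum snd (Rfun g1 g2 \<phi>)) UNIV"
  by (auto simp: DR_def Rfun_def)

lemma DR_DZ: "\<phi> \<in> DR g1 g2 \<Longrightarrow> \<phi> \<in> DZ g1 g2" by (simp add: DR_def)
lemma DZ_Rplus2: "\<phi> \<in> DZ g1 g2 \<Longrightarrow> \<phi> \<in> Rplus2" by (simp add: DZ_def)

lemma nubar_pos:
  assumes "\<phi> \<in> DZ g1 g2" "fst \<phi> = 0 \<longrightarrow> fst k = 0" "snd \<phi> = 0 \<longrightarrow> snd k = 0"
  shows "nubar1 g1 g2 \<phi> k > 0"
proof -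
  have r: "\<phi> \<in> Rplus2" using assms(1) by (simp add: DZ_def)
  have a: "fst \<phi> ^ fst k > 0"
    using assms(2) r by (cases "fst \<phi> = 0") (auto simp: Rplus2_def)
  have b: "snd \<phi> ^ snd k > 0"
    using assms(3) r by (cases "snd \<phi> = 0") (auto simp: Rplus2_def)
  show ?thesis using a b gfact_pos[OF lj, of k] Z_ge1[OF lj assms(1)]
    unfolding nubar1_def Zterm_def by simp
qed

lemma nubar_zero1: "fst \<phi> = 0 \<Longrightarrow> fst k \<noteq> 0 \<Longrightarrow> nubar1 g1 g2 \<phi> k = 0"
  unfolding nubar1_def Zterm_def by simp
lemma nubar_zero2: "snd \<phi> = 0 \<Longrightarrow> snd k \<noteq> 0 \<Longrightarrow> nubar1 g1 g2 \<phi> k = 0"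
  unfolding nubar1_def Zterm_def by simp

lemma R1_zero: "\<phi> \<in> DR g1 g2 \<Longrightarrow> fst \<phi> = 0 \<Longrightarrow> fst (Rfun g1 g2 \<phi>) = 0"
proof -
  assume "fst \<phi> = 0"
  have "(\<lambda>k. real (fst k) * nubar1 g1 g2 \<phi> k) = (\<lambda>_. 0)"
  proof (rule ext)
    fix k :: "nat \<times> nat"
    show "real (fst k) * nubar1 g1 g2 \<phi> k = 0"
    proof (cases "fst k = 0")
      case True then show ?thesis by simp
    next
      case False then show ?thesis using nubar_zero1[of \<phi> k] \<open>fst \<phi> = 0\<close> by simp
    qed
  qed
  then show ?thesis unfolding Rfun_def by simp
qed

lemma R2_zero: "\<phi> \<in> DR g1 g2 \<Longrightarrow> snd \<phi> = 0 \<Longrightarrow> snd (Rfun g1 g2 \<phi>) = 0"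
proof -
  assume "snd \<phi> = 0"
  have "(\<lambda>k. real (snd k) * nubar1 g1 g2 \<phi> k) = (\<lambda>_. 0)"
  proof (rule ext)
    fix k :: "nat \<times> nat"
    show "real (snd k) * nubar1 g1 g2 \<phi> k = 0"
    proof (cases "snd k = 0")
      case True then show ?thesis by simp
    next
      case False then show ?thesis using nubar_zero2[of \<phi> k] \<open>snd \<phi> = 0\<close> by simp
    qed
  qed
  then show ?thesis unfolding Rfun_def by simp
qed

lemma R1_pos:
  assumes "\<phi> \<in> DR g1 g2" "fst \<phi> > 0"
  shows "fst (Rfun g1 g2 \<phi>) > 0"
proof -
  have dz: "\<phi> \<in> DZ g1 g2" using assms by (simp add: DR_def)
  have r: "\<phi> \<in> Rplus2" using dz by (simp add: DZ_def)
  have "infsum (\<lambda>k. real (fst k) * nubar1 g1 g2 \<phi> k) {(1,0)} \<le> infsum (\<lambda>k. real (fst k) * nubar1 g1 g2 \<phi> k) UNIV"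
  proof (rule infsum_mono_neutral)
    show "(\<lambda>k. real (fst k) * nubar1 g1 g2 \<phi> k) summable_on {(1,0)}" by simp
    show "(\<lambda>k. real (fst k) * nubar1 g1 g2 \<phi> k) summable_on UNIV" using assms(1) by (simp add: DR_def)
    fix k
    show "0 \<le> real (fst k) * nubar1 g1 g2 \<phi> k" using nubar_nonneg[OF lj r, of k] by simp
  qed auto
  moreover have "nubar1 g1 g2 \<phi> (1,0) > 0" using nubar_pos[OF dz] assms by auto
  ultimately show ?thesis unfolding Rfun_def by simp
qed

lemma R2_pos:
  assumes "\<phi> \<in> DR g1 g2" "snd \<phi> > 0"
  shows "snd (Rfun g1 g2 \<phi>) > 0"
proof -
  have dz: "\<phi> \<in> DZ g1 g2" using assms by (simp add: DR_def)
  have r: "\<phi> \<in> Rplus2" using dz by (simp add: DZ_def)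
  have "infsum (\<lambda>k. real (snd k) * nubar1 g1 g2 \<phi> k) {(0,1)} \<le> infsum (\<lambda>k. real (snd k) * nubar1 g1 g2 \<phi> k) UNIV"
  proof (rule infsum_mono_neutral)
    show "(\<lambda>k. real (snd k) * nubar1 g1 g2 \<phi> k) summable_on {(0,1)}" by simp
    show "(\<lambda>k. real (snd k) * nubar1 g1 g2 \<phi> k) summable_on UNIV" using assms(1) by (simp add: DR_def)
    fix k
    show "0 \<le> real (snd k) * nubar1 g1 g2 \<phi> k" using nubar_nonneg[OF lj r, of k] by simp
  qed auto
  moreover have "nubar1 g1 g2 \<phi> (0,1) > 0" using nubar_pos[OF dz] assms by auto
  ultimately show ?thesis unfolding Rfun_def by simp
qed

lemma R_nonneg:
  assumes "\<phi> \<in> DR g1 g2"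
  shows "fst (Rfun g1 g2 \<phi>) \<ge> 0 \<and> snd (Rfun g1 g2 \<phi>) \<ge> 0"
proof -
  have r: "fst \<phi> \<ge> 0" "snd \<phi> \<ge> 0" using DZ_Rplus2[OF DR_DZ[OF assms]] by (auto simp: Rplus2_def)
  have "fst (Rfun g1 g2 \<phi>) \<ge> 0"
  proof (cases "fst \<phi> = 0")
    case True then show ?thesis using R1_zero[OF assms] by simp
  next
    case False then show ?thesis using R1_pos[OF assms] r by simp
  qed
  moreover have "snd (Rfun g1 g2 \<phi>) \<ge> 0"
  proof (cases "snd \<phi> = 0")
    case True then show ?thesis using R2_zero[OF assms] by simp
  next
    case False then show ?thesis using R2_pos[OF assms] r by simp
  qed
  ultimately show ?thesis by simp
qed

lemma ln_aux: "(A::real) > 0 \<Longrightarrow> B > 0 \<Longrightarrow> g > 0 \<Longrightarrow> Z > 0 \<Longrightarrow> ln (A * B / g / Z) = ln A + ln B - ln g - ln Z"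
  by (simp add: ln_div ln_mult)

lemma ln_nubar:
  assumes "\<phi> \<in> DZ g1 g2" "fst \<phi> = 0 \<longrightarrow> fst k = 0" "snd \<phi> = 0 \<longrightarrow> snd k = 0"
  shows "ln (nubar1 g1 g2 \<phi> k) = real (fst k) * ln (fst \<phi>) + real (snd k) * ln (snd \<phi>)
            - ln (gfact g1 g2 k) - ln (Zfun g1 g2 \<phi>)"
proof -
  have r: "\<phi> \<in> Rplus2" using assms(1) by (simp add: DZ_def)
  have a: "fst \<phi> ^ fst k > 0 \<and> ln (fst \<phi> ^ fst k) = real (fst k) * ln (fst \<phi>)"
  proof (cases "fst \<phi> = 0")
    case True then show ?thesis using assms(2) by simp
  next
    case False then have "fst \<phi> > 0" using r by (simp add: Rplus2_def)
    then show ?thesis by (simp add: ln_realpow)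
  qed
  have b: "snd \<phi> ^ snd k > 0 \<and> ln (snd \<phi> ^ snd k) = real (snd k) * ln (snd \<phi>)"
  proof (cases "snd \<phi> = 0")
    case True then show ?thesis using assms(3) by simp
  next
    case False then have "snd \<phi> > 0" using r by (simp add: Rplus2_def)
    then show ?thesis by (simp add: ln_realpow)
  qed
  have g: "gfact g1 g2 k > 0" by (rule gfact_pos[OF lj])
  have z: "Zfun g1 g2 \<phi> > 0" using Z_ge1[OF lj assms(1)] by simp
  have "nubar1 g1 g2 \<phi> k = (fst \<phi> ^ fst k) * (snd \<phi> ^ snd k) / gfact g1 g2 k / Zfun g1 g2 \<phi>"
    unfolding nubar1_def Zterm_def by simp
  then show ?thesis using ln_aux[of "fst \<phi> ^ fst k" "snd \<phi> ^ snd k"] a b g z by simp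
qed

lemma R_inj:
  assumes "\<phi> \<in> DR g1 g2" "\<psi> \<in> DR g1 g2" "Rfun g1 g2 \<phi> = Rfun g1 g2 \<psi>"
  shows "\<phi> = \<psi>"
proof -
  have dzp: "\<phi> \<in> DZ g1 g2" and dzq: "\<psi> \<in> DZ g1 g2" using assms by (auto simp: DR_def)
  have rp: "\<phi> \<in> Rplus2" and rq: "\<psi> \<in> Rplus2" using dzp dzq by (auto simp: DZ_def)
  have rp': "fst \<phi> \<ge> 0" "snd \<phi> \<ge> 0" "fst \<psi> \<ge> 0" "snd \<psi> \<ge> 0"
    using rp rq by (auto simp: Rplus2_def)
  have z1: "fst \<phi> = 0 \<longleftrightarrow> fst \<psi> = 0"
  proof
    assume "fst \<phi> = 0"
    then have "fst (Rfun g1 g2 \<psi>) = 0" using R1_zero[OF assms(1)] assms(3) by simp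
    then show "fst \<psi> = 0" using R1_pos[OF assms(2)] rp' by force
  next
    assume "fst \<psi> = 0"
    then have "fst (Rfun g1 g2 \<phi>) = 0" using R1_zero[OF assms(2)] assms(3) by simp
    then show "fst \<phi> = 0" using R1_pos[OF assms(1)] rp' by force
  qed
  have z2: "snd \<phi> = 0 \<longleftrightarrow> snd \<psi> = 0"
  proof
    assume "snd \<phi> = 0"
    then have "snd (Rfun g1 g2 \<psi>) = 0" using R2_zero[OF assms(1)] assms(3) by simp
    then show "snd \<psi> = 0" using R2_pos[OF assms(2)] rp' by force
  next
    assume "snd \<psi> = 0"
    then have "snd (Rfun g1 g2 \<phi>) = 0" using R2_zero[OF assms(2)] assms(3) by simp
    then show "snd \<phi> = 0" using R2_pos[OF assms(1)] rp' by force
  qed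
  define p where "p = nubar1 g1 g2 \<phi>"
  define q where "q = nubar1 g1 g2 \<psi>"
  define S where "S = {k::nat\<times>nat. (fst \<phi> = 0 \<longrightarrow> fst k = 0) \<and> (snd \<phi> = 0 \<longrightarrow> snd k = 0)}"
  define v1 where "v1 = ln (fst \<phi>) - ln (fst \<psi>)"
  define v2 where "v2 = ln (snd \<phi>) - ln (snd \<psi>)"
  define c where "c = ln (Zfun g1 g2 \<phi>) - ln (Zfun g1 g2 \<psi>)"
  define t where "t (k::nat\<times>nat) = (p k - q k) * (ln (p k) - ln (q k))" for k
  have pS: "k \<in> S \<Longrightarrow> p k > 0 \<and> q k > 0" for k
    unfolding p_def q_def S_def using nubar_pos[OF dzp, of k] nubar_pos[OF dzq, of k] z1 z2 by simp
  have nS: "k \<notin> S \<Longrightarrow> p k = 0 \<and> q k = 0" for k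
  proof -
    assume "k \<notin> S"
    then have "(fst \<phi> = 0 \<and> fst k \<noteq> 0) \<or> (snd \<phi> = 0 \<and> snd k \<noteq> 0)" by (auto simp: S_def)
    then show ?thesis
    proof
      assume h: "fst \<phi> = 0 \<and> fst k \<noteq> 0"
      then show ?thesis unfolding p_def q_def using nubar_zero1[of \<phi> k] nubar_zero1[of \<psi> k] z1 by blast
    next
      assume h: "snd \<phi> = 0 \<and> snd k \<noteq> 0"
      then show ?thesis unfolding p_def q_def using nubar_zero2[of \<phi> k] nubar_zero2[of \<psi> k] z2 by blast
    qed
  qed
  have teq: "t k = v1 * (real (fst k) * p k - real (fst k) * q k)
       + v2 * (real (snd k) * p k - real (snd k) * q k) + (- c) * (p k - q k)" for k
  proof (cases "k \<in> S")
    case True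
    have c1: "fst \<phi> = 0 \<longrightarrow> fst k = 0" "snd \<phi> = 0 \<longrightarrow> snd k = 0"
      "fst \<psi> = 0 \<longrightarrow> fst k = 0" "snd \<psi> = 0 \<longrightarrow> snd k = 0"
      using True z1 z2 by (auto simp: S_def)
    have e1: "ln (p k) = real (fst k) * ln (fst \<phi>) + real (snd k) * ln (snd \<phi>)
            - ln (gfact g1 g2 k) - ln (Zfun g1 g2 \<phi>)"
      unfolding p_def by (rule ln_nubar[OF dzp c1(1,2)])
    have e2: "ln (q k) = real (fst k) * ln (fst \<psi>) + real (snd k) * ln (snd \<psi>)
            - ln (gfact g1 g2 k) - ln (Zfun g1 g2 \<psi>)"
      unfolding q_def by (rule ln_nubar[OF dzq c1(3,4)])
    have "ln (p k) - ln (q k) = real (fst k) * v1 + real (snd k) * v2 - c"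
      unfolding e1 e2 v1_def v2_def c_def by (simp add: algebra_simps)
    then show ?thesis unfolding t_def by (simp only:) (simp add: algebra_simps)
  next
    case False then show ?thesis using nS[of k] by (simp add: t_def)
  qed
  have h1: "((\<lambda>k. real (fst k) * p k - real (fst k) * q k) has_sum 0) UNIV"
    using has_sum_add[OF R1_has_sum[OF assms(1)] has_sum_uminusI[OF R1_has_sum[OF assms(2)]]] assms(3)
    by (simp add: p_def q_def)
  have h2: "((\<lambda>k. real (snd k) * p k - real (snd k) * q k) has_sum 0) UNIV"
    using has_sum_add[OF R2_has_sum[OF assms(1)] has_sum_uminusI[OF R2_has_sum[OF assms(2)]]] assms(3)
    by (simp add: p_def q_def)
  have h3: "((\<lambda>k. p k - q k) has_sum 0) UNIV"
    using has_sum_add[OF nubar_has_sum[OF lj dzp] has_sum_uminusI[OF nubar_has_sum[OF lj dzq]]]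
    by (simp add: p_def q_def)
  have ht: "(t has_sum 0) UNIV"
    using has_sum_add[OF has_sum_add[OF has_sum_cmult_right[OF h1, of v1] has_sum_cmult_right[OF h2, of v2]]
        has_sum_cmult_right[OF h3, of "-c"]]
    by (simp add: teq[abs_def])
  have tnn: "t k \<ge> 0" for k
  proof (cases "k \<in> S")
    case True
    then have "p k > 0" "q k > 0" using pS by auto
    then show ?thesis unfolding t_def by (rule lnmon_nonneg)
  next
    case False then show ?thesis using nS[of k] by (simp add: t_def)
  qed
  have t0: "t k = 0" for k
  proof -
    have "infsum t {k} \<le> infsum t UNIV"
      using ht tnn by (intro infsum_mono_neutral) (auto simp: has_sum_iff)
    then have "t k \<le> 0" using ht by (simp add: has_sum_iff)
    then show ?thesis using tnn[of k] by simp
  qed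
  have peq: "k \<in> S \<Longrightarrow> p k = q k" for k
  proof (rule ccontr)
    assume k: "k \<in> S" and ne: "p k \<noteq> q k"
    have "p k > 0" "q k > 0" using pS[OF k] by auto
    then have "t k > 0" using ne unfolding t_def by (intro lnmon_pos)
    then show False using t0[of k] by simp
  qed
  have Zp: "Zfun g1 g2 \<phi> > 0" "Zfun g1 g2 \<psi> > 0" using Z_ge1[OF lj dzp] Z_ge1[OF lj dzq] by auto
  have "p (0,0) = q (0,0)" by (rule peq) (simp add: S_def)
  then have Zeq: "Zfun g1 g2 \<phi> = Zfun g1 g2 \<psi>"
    unfolding p_def q_def nubar1_def using Zterm_00[OF lj] Zp by simp
  have f1: "fst \<phi> = fst \<psi>"
  proof (cases "fst \<phi> = 0")
    case True then show ?thesis using z1 by simp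
  next
    case False
    then have "p (1,0) = q (1,0)" by (intro peq) (simp add: S_def)
    then show ?thesis unfolding p_def q_def nubar1_def Zterm_def using Zeq Zp gfact_pos[OF lj, of "(1,0)"]
      by (simp add: field_simps)
  qed
  have f2: "snd \<phi> = snd \<psi>"
  proof (cases "snd \<phi> = 0")
    case True then show ?thesis using z2 by simp
  next
    case False
    then have "p (0,1) = q (0,1)" by (intro peq) (simp add: S_def)
    then show ?thesis unfolding p_def q_def nubar1_def Zterm_def using Zeq Zp gfact_pos[OF lj, of "(0,1)"]
      by (simp add: field_simps)
  qed
  show ?thesis by (rule prod_eqI[OF f1 f2])
qed

lemma Phi_R:
  assumes "\<phi> \<in> DR g1 g2"
  shows "Phi g1 g2 (Rfun g1 g2 \<phi>) = \<phi>"
  unfolding Phi_def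
proof (rule the_equality)
  show "\<phi> \<in> DR g1 g2 \<and> Rfun g1 g2 \<phi> = Rfun g1 g2 \<phi>" using assms by simp
  fix \<psi> assume "\<psi> \<in> DR g1 g2 \<and> Rfun g1 g2 \<psi> = Rfun g1 g2 \<phi>"
  then show "\<psi> = \<phi>" using R_inj[of \<psi> \<phi>] assms by blast
qed

end


lemma cont_infsum_dom:
  fixes f :: "'p::topological_space \<Rightarrow> 'k \<Rightarrow> real"
  assumes h: "h summable_on UNIV" and b: "\<And>x k. x \<in> S \<Longrightarrow> \<bar>f x k\<bar> \<le> h k"
    and c: "\<And>k. continuous_on S (\<lambda>x. f x k)"
  shows "continuous_on S (\<lambda>x. infsum (f x) UNIV)"
proof (rule uniform_limit_theorem)
  show "\<forall>\<^sub>F X in finite_subsets_at_top UNIV. continuous_on S (\<lambda>x. \<Sum>k\<in>X. f x k)"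
    by (intro always_eventually allI continuous_on_sum c)
  show "uniform_limit S (\<lambda>X x. \<Sum>k\<in>X. f x k) (\<lambda>x. infsum (f x) UNIV) (finite_subsets_at_top UNIV)"
    using Weierstrass_m_test_general[of UNIV S "\<lambda>k x. f x k" h] h b by simp
  show "\<not> trivial_limit (finite_subsets_at_top (UNIV :: 'k set))"
    by (simp add: finite_subsets_at_top_neq_bot)
qed

definition absv :: "real \<times> real \<Rightarrow> real \<times> real" where
  "absv x = (\<bar>fst x\<bar>, \<bar>snd x\<bar>)"

definition Rt :: "(nat \<times> nat \<Rightarrow> real) \<Rightarrow> (nat \<times> nat \<Rightarrow> real) \<Rightarrow> real \<times> real \<Rightarrow> real \<times> real" where
  "Rt g1 g2 x = (sgn (fst x) * fst (Rfun g1 g2 (absv x)), sgn (snd x) * snd (Rfun g1 g2 (absv x)))"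

lemma absv_Rplus2: "absv x \<in> Rplus2" by (simp add: absv_def Rplus2_def)
lemma absv_id: "x \<in> Rplus2 \<Longrightarrow> absv x = x" by (simp add: absv_def Rplus2_def)
lemma continuous_absv: "continuous_on S absv"
  unfolding absv_def by (intro continuous_intros)

lemma term_sgn_aux:
  "real n * (a * \<bar>a\<bar> ^ (n - 1)) = sgn (a::real) * (real n * \<bar>a\<bar> ^ n)"
proof (cases n)
  case 0 then show ?thesis by simp
next
  case (Suc m)
  have "a * \<bar>a\<bar> ^ m = sgn a * \<bar>a\<bar> ^ Suc m"
    by (metis mult.assoc mult_sgn_abs power_Suc)
  then show ?thesis using Suc by simp
qed

lemma term_abs_aux:
  "\<bar>real n * (a * \<bar>a\<bar> ^ (n - 1))\<bar> = real n * \<bar>a::real\<bar> ^ n"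
proof (cases n)
  case 0 then show ?thesis by simp
next
  case (Suc m)
  then show ?thesis by (simp add: abs_mult power_abs)
qed

context
  fixes g1 g2 :: "nat \<times> nat \<Rightarrow> real"
  assumes lj: "local_jump_rate g1 g2"
begin

lemma Rt_id: "\<phi> \<in> DR g1 g2 \<Longrightarrow> Rt g1 g2 \<phi> = Rfun g1 g2 \<phi>"
proof -
  assume a: "\<phi> \<in> DR g1 g2"
  have r: "fst \<phi> \<ge> 0" "snd \<phi> \<ge> 0" using DZ_Rplus2[OF lj DR_DZ[OF lj a]] by (auto simp: Rplus2_def)
  have ab: "absv \<phi> = \<phi>" using absv_id DZ_Rplus2[OF lj DR_DZ[OF lj a]] by simp
  have 1: "sgn (fst \<phi>) * fst (Rfun g1 g2 \<phi>) = fst (Rfun g1 g2 \<phi>)"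
    using r R1_zero[OF lj a] by (cases "fst \<phi> = 0") auto
  have 2: "sgn (snd \<phi>) * snd (Rfun g1 g2 \<phi>) = snd (Rfun g1 g2 \<phi>)"
    using r R2_zero[OF lj a] by (cases "snd \<phi> = 0") auto
  show ?thesis unfolding Rt_def ab 1 2 by simp
qed

lemma absv_Rt:
  assumes "absv x \<in> DR g1 g2"
  shows "absv (Rt g1 g2 x) = Rfun g1 g2 (absv x)"
proof -
  have n: "fst (Rfun g1 g2 (absv x)) \<ge> 0" "snd (Rfun g1 g2 (absv x)) \<ge> 0"
    using R_nonneg[OF lj assms] by auto
  have 1: "\<bar>sgn (fst x) * fst (Rfun g1 g2 (absv x))\<bar> = fst (Rfun g1 g2 (absv x))"
  proof (cases "fst x = 0")
    case True
    then have "fst (absv x) = 0" by (simp add: absv_def)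
    then show ?thesis using R1_zero[OF lj assms] by simp
  next
    case False then show ?thesis using n by (simp add: abs_mult sgn_if)
  qed
  have 2: "\<bar>sgn (snd x) * snd (Rfun g1 g2 (absv x))\<bar> = snd (Rfun g1 g2 (absv x))"
  proof (cases "snd x = 0")
    case True
    then have "snd (absv x) = 0" by (simp add: absv_def)
    then show ?thesis using R2_zero[OF lj assms] by simp
  next
    case False then show ?thesis using n by (simp add: abs_mult sgn_if)
  qed
  show ?thesis unfolding Rt_def absv_def[of "(_, _)"] using 1 2 by simp
qed

lemma Rt_inj:
  assumes "absv x \<in> DR g1 g2" "absv y \<in> DR g1 g2" "Rt g1 g2 x = Rt g1 g2 y"
  shows "x = y"
proof -
  have "Rfun g1 g2 (absv x) = Rfun g1 g2 (absv y)"
    using absv_Rt[OF assms(1)] absv_Rt[OF assms(2)] assms(3) by simp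
  then have ab: "absv x = absv y" using R_inj[OF lj assms(1,2)] by simp
  then have a1: "\<bar>fst x\<bar> = \<bar>fst y\<bar>" and a2: "\<bar>snd x\<bar> = \<bar>snd y\<bar>" by (auto simp: absv_def)
  have e1: "sgn (fst x) * fst (Rfun g1 g2 (absv x)) = sgn (fst y) * fst (Rfun g1 g2 (absv x))"
    using assms(3) ab unfolding Rt_def by simp
  have e2: "sgn (snd x) * snd (Rfun g1 g2 (absv x)) = sgn (snd y) * snd (Rfun g1 g2 (absv x))"
    using assms(3) ab unfolding Rt_def by simp
  have f1: "fst x = fst y"
  proof (cases "fst x = 0")
    case True then show ?thesis using a1 by simp
  next
    case False
    then have "fst (absv x) > 0" by (simp add: absv_def)
    then have "fst (Rfun g1 g2 (absv x)) > 0" by (rule R1_pos[OF lj assms(1)])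
    then have "sgn (fst x) = sgn (fst y)" using e1 by simp
    then show ?thesis using a1 by (metis mult_sgn_abs)
  qed
  have f2: "snd x = snd y"
  proof (cases "snd x = 0")
    case True then show ?thesis using a2 by simp
  next
    case False
    then have "snd (absv x) > 0" by (simp add: absv_def)
    then have "snd (Rfun g1 g2 (absv x)) > 0" by (rule R2_pos[OF lj assms(1)])
    then have "sgn (snd x) = sgn (snd y)" using e2 by simp
    then show ?thesis using a2 by (metis mult_sgn_abs)
  qed
  show ?thesis by (rule prod_eqI[OF f1 f2])
qed

lemma R1_quot:
  assumes "\<phi> \<in> DR g1 g2"
  shows "fst (Rfun g1 g2 \<phi>) = infsum (\<lambda>k. real (fst k) * Zterm g1 g2 \<phi> k) UNIV / Zfun g1 g2 \<phi>"
proof -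
  have "fst (Rfun g1 g2 \<phi>) = infsum (\<lambda>k. real (fst k) * Zterm g1 g2 \<phi> k * inverse (Zfun g1 g2 \<phi>)) UNIV"
    unfolding Rfun_def nubar1_def by (simp add: field_simps)
  also have "\<dots> = infsum (\<lambda>k. real (fst k) * Zterm g1 g2 \<phi> k) UNIV * inverse (Zfun g1 g2 \<phi>)"
    by (rule infsum_cmult_left')
  finally show ?thesis by (simp add: field_simps)
qed

lemma R2_quot:
  assumes "\<phi> \<in> DR g1 g2"
  shows "snd (Rfun g1 g2 \<phi>) = infsum (\<lambda>k. real (snd k) * Zterm g1 g2 \<phi> k) UNIV / Zfun g1 g2 \<phi>"
proof -
  have "snd (Rfun g1 g2 \<phi>) = infsum (\<lambda>k. real (snd k) * Zterm g1 g2 \<phi> k * inverse (Zfun g1 g2 \<phi>)) UNIV"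
    unfolding Rfun_def nubar1_def by (simp add: field_simps)
  also have "\<dots> = infsum (\<lambda>k. real (snd k) * Zterm g1 g2 \<phi> k) UNIV * inverse (Zfun g1 g2 \<phi>)"
    by (rule infsum_cmult_left')
  finally show ?thesis by (simp add: field_simps)
qed

lemma R1_Zterm_summable:
  assumes "\<phi> \<in> DR g1 g2"
  shows "(\<lambda>k. real (fst k) * Zterm g1 g2 \<phi> k) summable_on UNIV"
proof -
  have "(\<lambda>k. real (fst k) * nubar1 g1 g2 \<phi> k * Zfun g1 g2 \<phi>) summable_on UNIV"
    using assms by (intro summable_on_cmult_left) (simp add: DR_def)
  moreover have "Zfun g1 g2 \<phi> > 0" using Z_ge1[OF lj DR_DZ[OF lj assms]] by simp
  ultimately show ?thesis unfolding nubar1_def by simp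
qed

lemma R2_Zterm_summable:
  assumes "\<phi> \<in> DR g1 g2"
  shows "(\<lambda>k. real (snd k) * Zterm g1 g2 \<phi> k) summable_on UNIV"
proof -
  have "(\<lambda>k. real (snd k) * nubar1 g1 g2 \<phi> k * Zfun g1 g2 \<phi>) summable_on UNIV"
    using assms by (intro summable_on_cmult_left) (simp add: DR_def)
  moreover have "Zfun g1 g2 \<phi> > 0" using Z_ge1[OF lj DR_DZ[OF lj assms]] by simp
  ultimately show ?thesis unfolding nubar1_def by simp
qed

lemma Rt_cont:
  assumes p': "\<phi>' \<in> DR g1 g2"
    and om: "\<And>x. x \<in> \<Omega> \<Longrightarrow> absv x \<in> DR g1 g2 \<and> \<bar>fst x\<bar> \<le> fst \<phi>' \<and> \<bar>snd x\<bar> \<le> snd \<phi>'"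
  shows "continuous_on \<Omega> (Rt g1 g2)"
proof -
  define Zt where "Zt x = infsum (\<lambda>k. \<bar>fst x\<bar> ^ fst k * \<bar>snd x\<bar> ^ snd k / gfact g1 g2 k) UNIV" for x :: "real \<times> real"
  define N1 where "N1 x = infsum (\<lambda>k. real (fst k) * (fst x * \<bar>fst x\<bar> ^ (fst k - 1)) * \<bar>snd x\<bar> ^ snd k / gfact g1 g2 k) UNIV" for x :: "real \<times> real"
  define N2 where "N2 x = infsum (\<lambda>k. real (snd k) * (snd x * \<bar>snd x\<bar> ^ (snd k - 1)) * \<bar>fst x\<bar> ^ fst k / gfact g1 g2 k) UNIV" for x :: "real \<times> real"
  have rp': "fst \<phi>' \<ge> 0" "snd \<phi>' \<ge> 0" using DZ_Rplus2[OF lj DR_DZ[OF lj p']] by (auto simp: Rplus2_def)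
  have g: "gfact g1 g2 k > 0" for k by (rule gfact_pos[OF lj])
  have cZ: "continuous_on \<Omega> Zt" unfolding Zt_def
  proof (rule cont_infsum_dom[where h = "Zterm g1 g2 \<phi>'"])
    show "Zterm g1 g2 \<phi>' summable_on UNIV" using p' by (simp add: DR_def DZ_def)
    fix x k assume x: "x \<in> \<Omega>"
    have "\<bar>fst x\<bar> ^ fst k * \<bar>snd x\<bar> ^ snd k / gfact g1 g2 k \<le> fst \<phi>' ^ fst k * snd \<phi>' ^ snd k / gfact g1 g2 k"
      using om[OF x] g[of k] by (intro divide_right_mono mult_mono power_mono) auto
    then show "\<bar>\<bar>fst x\<bar> ^ fst k * \<bar>snd x\<bar> ^ snd k / gfact g1 g2 k\<bar> \<le> Zterm g1 g2 \<phi>' k"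
      using g[of k] by (simp add: Zterm_def abs_mult)
  next
    fix k show "continuous_on \<Omega> (\<lambda>x. \<bar>fst x\<bar> ^ fst k * \<bar>snd x\<bar> ^ snd k / gfact g1 g2 k)"
      using g[of k] by (intro continuous_intros) auto
  qed
  have cN1: "continuous_on \<Omega> N1" unfolding N1_def
  proof (rule cont_infsum_dom[where h = "\<lambda>k. real (fst k) * Zterm g1 g2 \<phi>' k"])
    show "(\<lambda>k. real (fst k) * Zterm g1 g2 \<phi>' k) summable_on UNIV" by (rule R1_Zterm_summable[OF p'])
    fix x k assume x: "x \<in> \<Omega>"
    have "\<bar>real (fst k) * (fst x * \<bar>fst x\<bar> ^ (fst k - 1)) * \<bar>snd x\<bar> ^ snd k / gfact g1 g2 k\<bar>
        = real (fst k) * \<bar>fst x\<bar> ^ fst k * \<bar>snd x\<bar> ^ snd k / gfact g1 g2 k"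
      using g[of k] term_abs_aux[of "fst k" "fst x"] by (simp add: abs_mult)
    also have "\<dots> \<le> real (fst k) * (fst \<phi>' ^ fst k * snd \<phi>' ^ snd k / gfact g1 g2 k)"
      using om[OF x] g[of k] by (simp only: mult.assoc times_divide_eq_right[symmetric])
         (intro mult_left_mono divide_right_mono mult_mono power_mono, auto)
    finally show "\<bar>real (fst k) * (fst x * \<bar>fst x\<bar> ^ (fst k - 1)) * \<bar>snd x\<bar> ^ snd k / gfact g1 g2 k\<bar>
        \<le> real (fst k) * Zterm g1 g2 \<phi>' k" by (simp add: Zterm_def)
  next
    fix k show "continuous_on \<Omega> (\<lambda>x. real (fst k) * (fst x * \<bar>fst x\<bar> ^ (fst k - 1)) * \<bar>snd x\<bar> ^ snd k / gfact g1 g2 k)"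
      using g[of k] by (intro continuous_intros) auto
  qed
  have cN2: "continuous_on \<Omega> N2" unfolding N2_def
  proof (rule cont_infsum_dom[where h = "\<lambda>k. real (snd k) * Zterm g1 g2 \<phi>' k"])
    show "(\<lambda>k. real (snd k) * Zterm g1 g2 \<phi>' k) summable_on UNIV" by (rule R2_Zterm_summable[OF p'])
    fix x k assume x: "x \<in> \<Omega>"
    have "\<bar>real (snd k) * (snd x * \<bar>snd x\<bar> ^ (snd k - 1)) * \<bar>fst x\<bar> ^ fst k / gfact g1 g2 k\<bar>
        = real (snd k) * \<bar>snd x\<bar> ^ snd k * \<bar>fst x\<bar> ^ fst k / gfact g1 g2 k"
      using g[of k] term_abs_aux[of "snd k" "snd x"] by (simp add: abs_mult)
    also have "\<dots> \<le> real (snd k) * (snd \<phi>' ^ snd k * fst \<phi>' ^ fst k / gfact g1 g2 k)"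
      using om[OF x] g[of k] by (simp only: mult.assoc times_divide_eq_right[symmetric])
         (intro mult_left_mono divide_right_mono mult_mono power_mono, auto)
    finally show "\<bar>real (snd k) * (snd x * \<bar>snd x\<bar> ^ (snd k - 1)) * \<bar>fst x\<bar> ^ fst k / gfact g1 g2 k\<bar>
        \<le> real (snd k) * Zterm g1 g2 \<phi>' k" by (simp add: Zterm_def mult.commute)
  next
    fix k show "continuous_on \<Omega> (\<lambda>x. real (snd k) * (snd x * \<bar>snd x\<bar> ^ (snd k - 1)) * \<bar>fst x\<bar> ^ fst k / gfact g1 g2 k)"
      using g[of k] by (intro continuous_intros) auto
  qed
  have eq: "Rt g1 g2 x = (N1 x / Zt x, N2 x / Zt x)" if x: "x \<in> \<Omega>" for x
  proof -
    have d: "absv x \<in> DR g1 g2" using om[OF x] by simp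
    have zt: "Zt x = Zfun g1 g2 (absv x)" unfolding Zt_def Zfun_def Zterm_def absv_def by simp
    have n1: "N1 x = sgn (fst x) * infsum (\<lambda>k. real (fst k) * Zterm g1 g2 (absv x) k) UNIV"
    proof -
      have "N1 x = infsum (\<lambda>k. sgn (fst x) * (real (fst k) * Zterm g1 g2 (absv x) k)) UNIV"
        unfolding N1_def
      proof (rule infsum_cong)
        fix k :: "nat \<times> nat"
        have e: "real (fst k) * (fst x * \<bar>fst x\<bar> ^ (fst k - 1)) = sgn (fst x) * (real (fst k) * \<bar>fst x\<bar> ^ fst k)"
          by (rule term_sgn_aux)
        show "real (fst k) * (fst x * \<bar>fst x\<bar> ^ (fst k - 1)) * \<bar>snd x\<bar> ^ snd k / gfact g1 g2 k =
          sgn (fst x) * (real (fst k) * Zterm g1 g2 (absv x) k)"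
          unfolding e by (simp add: Zterm_def absv_def mult_ac)
      qed
      then show ?thesis by (simp add: infsum_cmult_right')
    qed
    have n2: "N2 x = sgn (snd x) * infsum (\<lambda>k. real (snd k) * Zterm g1 g2 (absv x) k) UNIV"
    proof -
      have "N2 x = infsum (\<lambda>k. sgn (snd x) * (real (snd k) * Zterm g1 g2 (absv x) k)) UNIV"
        unfolding N2_def
      proof (rule infsum_cong)
        fix k :: "nat \<times> nat"
        have e: "real (snd k) * (snd x * \<bar>snd x\<bar> ^ (snd k - 1)) = sgn (snd x) * (real (snd k) * \<bar>snd x\<bar> ^ snd k)"
          by (rule term_sgn_aux)
        show "real (snd k) * (snd x * \<bar>snd x\<bar> ^ (snd k - 1)) * \<bar>fst x\<bar> ^ fst k / gfact g1 g2 k =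
          sgn (snd x) * (real (snd k) * Zterm g1 g2 (absv x) k)"
          unfolding e by (simp add: Zterm_def absv_def mult_ac)
      qed
      then show ?thesis by (simp add: infsum_cmult_right')
    qed
    show ?thesis unfolding Rt_def R1_quot[OF d] R2_quot[OF d] n1 n2 zt by simp
  qed
  have pos: "Zt x \<noteq> 0" if "x \<in> \<Omega>" for x
  proof -
    have "Zt x = Zfun g1 g2 (absv x)" unfolding Zt_def Zfun_def Zterm_def absv_def by simp
    moreover have "Zfun g1 g2 (absv x) \<ge> 1" using Z_ge1[OF lj DR_DZ[OF lj]] om[OF that] by blast
    ultimately show ?thesis by simp
  qed
  have "continuous_on \<Omega> (\<lambda>x. (N1 x / Zt x, N2 x / Zt x))"
    using cZ cN1 cN2 pos by (intro continuous_intros) auto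
  moreover have "continuous_on \<Omega> (\<lambda>x. (N1 x / Zt x, N2 x / Zt x)) = continuous_on \<Omega> (Rt g1 g2)"
    using eq by (intro continuous_on_cong) auto
  ultimately show ?thesis by simp
qed

end


definition goodscale :: "(nat \<times> nat \<Rightarrow> real) \<Rightarrow> (nat \<times> nat \<Rightarrow> real) \<Rightarrow> real \<Rightarrow> real \<Rightarrow> real \<times> real \<Rightarrow> bool" where
  "goodscale g1 g2 s M \<phi> \<longleftrightarrow> (s * fst \<phi>, s * snd \<phi>) \<in> DZ g1 g2 \<and> Zfun g1 g2 (s * fst \<phi>, s * snd \<phi>) \<le> M"

lemma s_aux:
  fixes c C \<delta> y :: real
  assumes "0 \<le> c" "c \<le> C" "\<delta> > 0" "0 \<le> y" "y \<le> c + \<delta>"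
  shows "(1 + \<delta> / (C + \<delta>)) * y \<le> c + 2 * \<delta>"
proof -
  have q: "(c + \<delta>) / (C + \<delta>) \<le> 1" using assms by (simp add: divide_le_eq_1)
  have "(1 + \<delta> / (C + \<delta>)) * y \<le> (1 + \<delta> / (C + \<delta>)) * (c + \<delta>)"
    using assms by (intro mult_left_mono) auto
  also have "\<dots> = c + \<delta> + \<delta> * ((c + \<delta>) / (C + \<delta>))" by (simp add: algebra_simps)
  also have "\<dots> \<le> c + \<delta> + \<delta> * 1" using q assms by (intro add_left_mono mult_left_mono) auto
  finally show ?thesis by simp
qed

context
  fixes g1 g2 :: "nat \<times> nat \<Rightarrow> real"
  assumes lj: "local_jump_rate g1 g2"
begin

lemma local_bound:
  assumes "\<phi>0 \<in> DR_int g1 g2"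
  shows "\<exists>V s M. open V \<and> Rfun g1 g2 \<phi>0 \<in> V \<and> s > 1 \<and>
     (\<forall>\<phi>\<in>DR g1 g2. Rfun g1 g2 \<phi> \<in> V \<longrightarrow> goodscale g1 g2 s M \<phi>)"
proof -
  obtain U where U: "open U" "\<phi>0 \<in> U" "U \<inter> Rplus2 \<subseteq> DR g1 g2" and p0: "\<phi>0 \<in> Rplus2"
    using assms unfolding DR_int_def by blast
  obtain e where e: "e > 0" "ball \<phi>0 e \<subseteq> U" using U(1,2) open_contains_ball by blast
  define \<delta> where "\<delta> = e / 5"
  have d: "\<delta> > 0" using e by (simp add: \<delta>_def)
  have r0: "fst \<phi>0 \<ge> 0" "snd \<phi>0 \<ge> 0" using p0 by (auto simp: Rplus2_def)
  define \<phi>' where "\<phi>' = (fst \<phi>0 + 2 * \<delta>, snd \<phi>0 + 2 * \<delta>)"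
  have "dist \<phi>0 \<phi>' \<le> \<bar>2 * \<delta>\<bar> + \<bar>2 * \<delta>\<bar>"
    unfolding \<phi>'_def using sqrt_sum_squares_le_sum_abs[of "2*\<delta>" "2*\<delta>"]
    by (cases \<phi>0) (simp add: dist_Pair_Pair dist_real_def)
  then have "dist \<phi>0 \<phi>' < e" using d by (simp add: \<delta>_def)
  then have "\<phi>' \<in> U" using e by auto
  moreover have "\<phi>' \<in> Rplus2" using r0 d by (simp add: \<phi>'_def Rplus2_def)
  ultimately have p': "\<phi>' \<in> DR g1 g2" using U(3) by blast
  define \<Omega> where "\<Omega> = absv -` ball \<phi>0 \<delta>"
  have oO: "open \<Omega>" unfolding \<Omega>_def by (intro open_vimage continuous_absv) simp
  have inO: "absv x \<in> DR g1 g2 \<and> \<bar>fst x\<bar> \<le> fst \<phi>' \<and> \<bar>snd x\<bar> \<le> snd \<phi>'" if x: "x \<in> \<Omega>" for x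
  proof -
    have b: "dist \<phi>0 (absv x) < \<delta>" using x by (simp add: \<Omega>_def)
    then have "absv x \<in> U" using e d unfolding \<delta>_def by auto
    then have 1: "absv x \<in> DR g1 g2" using U(3) absv_Rplus2 by blast
    have "dist (fst \<phi>0) (fst (absv x)) < \<delta>" "dist (snd \<phi>0) (snd (absv x)) < \<delta>"
      using b dist_fst_le[of \<phi>0 "absv x"] dist_snd_le[of \<phi>0 "absv x"] by auto
    then show ?thesis using 1 d by (auto simp: absv_def \<phi>'_def dist_real_def)
  qed
  have cont: "continuous_on \<Omega> (Rt g1 g2)" by (rule Rt_cont[OF lj p' inO])
  have inj: "inj_on (Rt g1 g2) \<Omega>" unfolding inj_on_def using inO Rt_inj[OF lj] by blast
  have oV: "open (Rt g1 g2 ` \<Omega>)" by (rule invariance_of_domain[OF cont oO inj])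
  have ab0: "absv \<phi>0 = \<phi>0" by (rule absv_id[OF p0])
  have inO0: "\<phi>0 \<in> \<Omega>" unfolding \<Omega>_def using ab0 d by simp
  have dr0: "\<phi>0 \<in> DR g1 g2" using inO[OF inO0] ab0 by simp
  have "Rfun g1 g2 \<phi>0 \<in> Rt g1 g2 ` \<Omega>" using Rt_id[OF lj dr0] inO0 by force
  define s where "s = 1 + \<delta> / (fst \<phi>0 + snd \<phi>0 + \<delta>)"
  have s1: "s > 1" unfolding s_def using d r0 by simp
  have good: "goodscale g1 g2 s (Zfun g1 g2 \<phi>') \<phi>"
    if \<phi>: "\<phi> \<in> DR g1 g2" "Rfun g1 g2 \<phi> \<in> Rt g1 g2 ` \<Omega>" for \<phi>
  proof -
    obtain x where x: "x \<in> \<Omega>" "Rfun g1 g2 \<phi> = Rt g1 g2 x" using \<phi>(2) by blast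
    have dx: "absv x \<in> DR g1 g2" using inO[OF x(1)] by simp
    have "absv (Rfun g1 g2 \<phi>) = Rfun g1 g2 \<phi>"
      using R_nonneg[OF lj \<phi>(1)] by (intro absv_id) (simp add: Rplus2_def)
    then have "Rfun g1 g2 (absv x) = Rfun g1 g2 \<phi>" using absv_Rt[OF lj dx] x(2) by simp
    then have ax: "absv x = \<phi>" using R_inj[OF lj dx \<phi>(1)] by simp
    have b: "dist \<phi>0 \<phi> < \<delta>" using x(1) ax by (simp add: \<Omega>_def)
    have "dist (fst \<phi>0) (fst \<phi>) < \<delta>" "dist (snd \<phi>0) (snd \<phi>) < \<delta>"
      using b dist_fst_le[of \<phi>0 \<phi>] dist_snd_le[of \<phi>0 \<phi>] by auto
    then have le: "fst \<phi> \<le> fst \<phi>0 + \<delta>" "snd \<phi> \<le> snd \<phi>0 + \<delta>" by (auto simp: dist_real_def)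
    have r: "fst \<phi> \<ge> 0" "snd \<phi> \<ge> 0" using DZ_Rplus2[OF lj DR_DZ[OF lj \<phi>(1)]] by (auto simp: Rplus2_def)
    have 1: "s * fst \<phi> \<le> fst \<phi>'" unfolding s_def \<phi>'_def
      using s_aux[of "fst \<phi>0" "fst \<phi>0 + snd \<phi>0" \<delta> "fst \<phi>"] r0 d r le by simp
    have 2: "s * snd \<phi> \<le> snd \<phi>'" unfolding s_def \<phi>'_def
      using s_aux[of "snd \<phi>0" "fst \<phi>0 + snd \<phi>0" \<delta> "snd \<phi>"] r0 d r le by simp
    have nn: "0 \<le> s * fst \<phi>" "0 \<le> s * snd \<phi>" using s1 r by auto
    show ?thesis unfolding goodscale_def
      using DZ_mono[OF lj DR_DZ[OF lj p'], of "(s * fst \<phi>, s * snd \<phi>)"] 1 2 nn by simp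
  qed
  show ?thesis
    by (rule exI[of _ "Rt g1 g2 ` \<Omega>"], rule exI[of _ s], rule exI[of _ "Zfun g1 g2 \<phi>'"])
       (use oV \<open>Rfun g1 g2 \<phi>0 \<in> Rt g1 g2 ` \<Omega>\<close> s1 good in blast)
qed

lemma goodscale_mono:
  assumes "goodscale g1 g2 s M \<phi>" "1 \<le> s'" "s' \<le> s" "M \<le> M'" "\<phi> \<in> Rplus2"
  shows "goodscale g1 g2 s' M' \<phi>"
proof -
  have r: "fst \<phi> \<ge> 0" "snd \<phi> \<ge> 0" using assms(5) by (auto simp: Rplus2_def)
  have "s' * fst \<phi> \<le> s * fst \<phi>" "s' * snd \<phi> \<le> s * snd \<phi>" using r assms(3) by (auto intro: mult_right_mono)
  moreover have "0 \<le> s' * fst \<phi>" "0 \<le> s' * snd \<phi>" using r assms(2) by auto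
  ultimately show ?thesis using DZ_mono[OF lj, of "(s * fst \<phi>, s * snd \<phi>)" "(s' * fst \<phi>, s' * snd \<phi>)"] assms(1,4)
    unfolding goodscale_def by fastforce
qed

lemma uniform_bound:
  assumes K: "compact K" "K \<subseteq> Rfun g1 g2 ` DR_int g1 g2"
  shows "\<exists>s>1. \<exists>M. \<forall>\<phi>\<in>DR g1 g2. Rfun g1 g2 \<phi> \<in> K \<longrightarrow> goodscale g1 g2 s M \<phi>"
proof -
  have "\<forall>\<rho>\<in>K. \<exists>VsM. open (fst VsM) \<and> \<rho> \<in> fst VsM \<and> fst (snd VsM) > 1 \<and>
      (\<forall>\<phi>\<in>DR g1 g2. Rfun g1 g2 \<phi> \<in> fst VsM \<longrightarrow> goodscale g1 g2 (fst (snd VsM)) (snd (snd VsM)) \<phi>)"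
  proof
    fix \<rho> assume "\<rho> \<in> K"
    then obtain \<phi>0 where "\<phi>0 \<in> DR_int g1 g2" "\<rho> = Rfun g1 g2 \<phi>0" using K(2) by blast
    then obtain V s M where "open V \<and> \<rho> \<in> V \<and> s > 1 \<and>
     (\<forall>\<phi>\<in>DR g1 g2. Rfun g1 g2 \<phi> \<in> V \<longrightarrow> goodscale g1 g2 s M \<phi>)" using local_bound by blast
    then show "\<exists>VsM. open (fst VsM) \<and> \<rho> \<in> fst VsM \<and> fst (snd VsM) > 1 \<and>
      (\<forall>\<phi>\<in>DR g1 g2. Rfun g1 g2 \<phi> \<in> fst VsM \<longrightarrow> goodscale g1 g2 (fst (snd VsM)) (snd (snd VsM)) \<phi>)"
      by (intro exI[of _ "(V, s, M)"]) simp
  qed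
  then obtain F where F: "\<forall>\<rho>\<in>K. open (fst (F \<rho>)) \<and> \<rho> \<in> fst (F \<rho>) \<and> fst (snd (F \<rho>)) > 1 \<and>
      (\<forall>\<phi>\<in>DR g1 g2. Rfun g1 g2 \<phi> \<in> fst (F \<rho>) \<longrightarrow> goodscale g1 g2 (fst (snd (F \<rho>))) (snd (snd (F \<rho>))) \<phi>)"
    by (metis bchoice)
  obtain T where T: "T \<subseteq> K" "finite T" "K \<subseteq> \<Union> ((\<lambda>\<rho>. fst (F \<rho>)) ` T)"
    by (rule compactE_image[OF K(1), of K "\<lambda>\<rho>. fst (F \<rho>)"]) (use F in auto)
  define s where "s = Min (insert 2 ((\<lambda>\<rho>. fst (snd (F \<rho>))) ` T))"
  define M where "M = Max (insert 0 ((\<lambda>\<rho>. snd (snd (F \<rho>))) ` T))"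
  have s1: "s > 1" unfolding s_def using T F by (subst Min_gr_iff) auto
  have "goodscale g1 g2 s M \<phi>" if \<phi>: "\<phi> \<in> DR g1 g2" "Rfun g1 g2 \<phi> \<in> K" for \<phi>
  proof -
    obtain \<rho> where \<rho>: "\<rho> \<in> T" "Rfun g1 g2 \<phi> \<in> fst (F \<rho>)" using T(3) \<phi>(2) by blast
    have g: "goodscale g1 g2 (fst (snd (F \<rho>))) (snd (snd (F \<rho>))) \<phi>" using F \<rho> T(1) \<phi>(1) by blast
    have "s \<le> fst (snd (F \<rho>))" unfolding s_def using T(2) \<rho>(1) by (intro Min_le) auto
    moreover have "snd (snd (F \<rho>)) \<le> M" unfolding M_def using T(2) \<rho>(1) by (intro Max_ge) auto
    ultimately show ?thesis using goodscale_mono[OF g, of s M] s1 DZ_Rplus2[OF lj DR_DZ[OF lj \<phi>(1)]] by simp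
  qed
  then show ?thesis using s1 by blast
qed

end


lemma prod_sum_le:
  fixes f :: "'x \<Rightarrow> 'k::countable \<Rightarrow> real" and z :: 'k
  assumes A: "finite A" and nn: "\<And>x k. x \<in> A \<Longrightarrow> 0 \<le> f x k"
    and sm: "\<And>x. x \<in> A \<Longrightarrow> f x summable_on UNIV"
    and le: "\<And>x. x \<in> A \<Longrightarrow> infsum (f x) UNIV \<le> c x"
    and S: "S \<subseteq> {\<eta>. \<forall>x. x \<notin> A \<longrightarrow> \<eta> x = z}"
  shows "(\<integral>\<^sup>+\<eta>. ennreal (\<Prod>x\<in>A. f x (\<eta> x)) \<partial>count_space S) \<le> ennreal (\<Prod>x\<in>A. c x)"
proof -
  define C where "C = {\<eta> :: 'x \<Rightarrow> 'k. \<forall>x. x \<notin> A \<longrightarrow> \<eta> x = z}"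
  define h where "h g = ennreal (\<Prod>x\<in>A. f x (g x))" for g :: "'x \<Rightarrow> 'k"
  have e1: "(\<integral>\<^sup>+\<eta>. h \<eta> \<partial>count_space S) = (\<integral>\<^sup>+\<eta>. h \<eta> * indicator S \<eta> \<partial>count_space UNIV)"
    by (simp add: nn_integral_count_space_indicator)
  have e2: "(\<integral>\<^sup>+\<eta>. h \<eta> \<partial>count_space C) = (\<integral>\<^sup>+\<eta>. h \<eta> * indicator C \<eta> \<partial>count_space UNIV)"
    by (simp add: nn_integral_count_space_indicator)
  have "(\<integral>\<^sup>+\<eta>. h \<eta> \<partial>count_space S) \<le> (\<integral>\<^sup>+\<eta>. h \<eta> \<partial>count_space C)"
    unfolding e1 e2
    by (intro nn_integral_mono) (use S in \<open>auto simp: indicator_def C_def\<close>)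
  also have "(\<integral>\<^sup>+\<eta>. h \<eta> \<partial>count_space C) = (\<integral>\<^sup>+\<eta>. h (restrict \<eta> A) \<partial>count_space C)"
    by (intro nn_integral_cong) (simp add: h_def)
  also have "\<dots> = (\<integral>\<^sup>+g. h g \<partial>count_space (PiE A (\<lambda>_. UNIV)))"
  proof (rule nn_integral_bij_count_space)
    show "bij_betw (\<lambda>\<eta>. restrict \<eta> A) C (PiE A (\<lambda>_. UNIV))"
    proof (rule bij_betw_byWitness[where f' = "\<lambda>g x. if x \<in> A then g x else z"])
      show "\<forall>a\<in>C. (\<lambda>x. if x \<in> A then restrict a A x else z) = a" by (auto simp: C_def fun_eq_iff)
      show "\<forall>a'\<in>PiE A (\<lambda>_. UNIV). restrict (\<lambda>x. if x \<in> A then a' x else z) A = a'"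
        by (auto simp: fun_eq_iff PiE_def extensional_def)
      show "(\<lambda>\<eta>. restrict \<eta> A) ` C \<subseteq> PiE A (\<lambda>_. UNIV)" by auto
      show "(\<lambda>g x. if x \<in> A then g x else z) ` PiE A (\<lambda>_. UNIV) \<subseteq> C" by (auto simp: C_def)
    qed
  qed
  also have "\<dots> = ennreal (infsetsum (\<lambda>g. \<Prod>x\<in>A. f x (g x)) (PiE A (\<lambda>_. UNIV)))"
    unfolding h_def
  proof (rule nn_integral_conv_infsetsum)
    show "Infinite_Set_Sum.abs_summable_on (\<lambda>g. \<Prod>x\<in>A. f x (g x)) (PiE A (\<lambda>_. UNIV))"
    proof (rule abs_summable_on_prod_PiE[OF A])
      fix x assume "x \<in> A"
      then show "Infinite_Set_Sum.abs_summable_on (f x) UNIV"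
        using sm abs_summable_equivalent summable_on_iff_abs_summable_on_real by blast
    qed auto
    show "\<And>g. g \<in> PiE A (\<lambda>_. UNIV) \<Longrightarrow> 0 \<le> (\<Prod>x\<in>A. f x (g x))"
      using nn by (auto intro: prod_nonneg)
  qed
  also have "infsetsum (\<lambda>g. \<Prod>x\<in>A. f x (g x)) (PiE A (\<lambda>_. UNIV)) = (\<Prod>x\<in>A. infsum (f x) UNIV)"
  proof -
    have "Infinite_Set_Sum.abs_summable_on (\<lambda>g. \<Prod>x\<in>A. f x (g x)) (PiE A (\<lambda>_. UNIV))"
    proof (rule abs_summable_on_prod_PiE[OF A])
      fix x assume "x \<in> A"
      then show "Infinite_Set_Sum.abs_summable_on (f x) UNIV"
        using sm abs_summable_equivalent summable_on_iff_abs_summable_on_real by blast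
    qed auto
    then have "infsetsum (\<lambda>g. \<Prod>x\<in>A. f x (g x)) (PiE A (\<lambda>_. UNIV)) = infsum (\<lambda>g. \<Prod>x\<in>A. f x (g x)) (PiE A (\<lambda>_. UNIV))"
      by (rule infsetsum_infsum)
    also have "\<dots> = (\<Prod>x\<in>A. infsum (f x) UNIV)"
      by (rule infsum_prod_PiE_abs[OF A]) (use sm summable_on_iff_abs_summable_on_real in blast)
    finally show ?thesis .
  qed
  also have "ennreal (\<Prod>x\<in>A. infsum (f x) UNIV) \<le> ennreal (\<Prod>x\<in>A. c x)"
    using le nn by (intro ennreal_leI prod_mono) (auto intro: infsum_nonneg)
  finally show ?thesis by (simp add: h_def)
qed

lemma neg_part_le:
  fixes m \<nu> :: real
  assumes "m > 0" "\<nu> \<ge> 0"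
  shows "max 0 (- (m * ln (m / \<nu>))) \<le> \<nu>"
proof (cases "\<nu> = 0")
  case True then show ?thesis by simp
next
  case False
  then have nu: "\<nu> > 0" using assms by simp
  have "- (m * ln (m / \<nu>)) = m * ln (\<nu> / m)" using nu assms by (simp add: ln_div algebra_simps)
  also have "\<dots> \<le> m * (\<nu> / m - 1)" using nu assms by (intro mult_left_mono ln_le_minus_one) auto
  also have "\<dots> = \<nu> - m" using assms by (simp add: field_simps)
  finally show ?thesis using assms nu by simp
qed

lemma young_ineq:
  fixes m p F :: real
  assumes "m > 0" "p > 0"
  shows "m * F \<le> m * ln (m / p) - m + p * exp F"
proof -
  have "1 + (F - ln (m / p)) \<le> exp (F - ln (m / p))" by (rule exp_ge_add_one_self)
  also have "exp (F - ln (m / p)) = exp F * p / m" using assms by (simp add: exp_diff)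
  finally have "m * (1 + (F - ln (m / p))) \<le> m * (exp F * p / m)" using assms by (intro mult_left_mono) auto
  then show ?thesis using assms by (simp add: algebra_simps)
qed

lemma pointwise_bound:
  fixes m vp vq Gt \<gamma> c :: real
  assumes m: "m > 0" and vp: "vp > 0" and vq: "vq > 0" and rat: "vp \<le> vq * exp Gt"
    and g: "\<gamma> > 0" and c: "c \<ge> 0"
  shows "max 0 (m * ln (m / vq)) \<le> (1 + 1/\<gamma>) * max 0 (m * ln (m / vp))
           + (1/\<gamma>) * (vp * exp (\<gamma> * Gt) * exp (- c)) + (c / \<gamma>) * m"
proof -
  define X where "X = m * ln (m / vp)"
  define Y where "Y = vp * exp (\<gamma> * Gt) * exp (- c)"
  have Y0: "Y \<ge> 0" using vp by (simp add: Y_def)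
  have "vp / vq \<le> exp Gt" using rat vq by (simp add: divide_le_eq mult.commute)
  then have "ln (vp / vq) \<le> ln (exp Gt)" using vp vq by (subst ln_le_cancel_iff) auto
  then have l1: "ln (vp / vq) \<le> Gt" by simp
  have l2: "ln (m / vq) = ln (m / vp) + ln (vp / vq)" using m vp vq by (simp add: ln_div)
  have a: "m * ln (m / vq) \<le> X + m * Gt"
    unfolding l2 X_def using l1 m by (simp add: distrib_left mult_left_mono)
  have "m * (\<gamma> * Gt - c) \<le> m * ln (m / vp) - m + vp * exp (\<gamma> * Gt - c)"
    by (rule young_ineq[OF m vp])
  also have "exp (\<gamma> * Gt - c) = exp (\<gamma> * Gt) * exp (- c)"
    by (simp add: exp_add[symmetric])
  finally have "\<gamma> * (m * Gt) \<le> X - m + Y + m * c" unfolding X_def Y_def by (simp add: algebra_simps)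
  then have "\<gamma> * (m * Gt) \<le> X + Y + m * c" using m by simp
  then have b: "m * Gt \<le> (X + Y + m * c) / \<gamma>" using g by (simp add: le_divide_eq mult.commute)
  have "m * ln (m / vq) \<le> X + (X + Y + m * c) / \<gamma>" using a b by simp
  also have "\<dots> = (1 + 1/\<gamma>) * X + (1/\<gamma>) * Y + (c / \<gamma>) * m" using g by (simp add: field_simps)
  also have "\<dots> \<le> (1 + 1/\<gamma>) * max 0 X + (1/\<gamma>) * Y + (c / \<gamma>) * m"
    using g by (intro add_right_mono mult_left_mono) auto
  finally have c1: "m * ln (m / vq) \<le> (1 + 1/\<gamma>) * max 0 X + (1/\<gamma>) * Y + (c / \<gamma>) * m" .
  have c2: "0 \<le> (1 + 1/\<gamma>) * max 0 X + (1/\<gamma>) * Y + (c / \<gamma>) * m"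
    using g c m Y0 by (intro add_nonneg_nonneg mult_nonneg_nonneg) auto
  show ?thesis using c1 c2 unfolding X_def Y_def by simp
qed


definition Ppart :: "'a pmf \<Rightarrow> ('a \<Rightarrow> real) \<Rightarrow> ennreal" where
  "Ppart \<mu> \<nu> = (\<integral>\<^sup>+ \<eta>. ennreal (max 0 (pmf \<mu> \<eta> * ln (pmf \<mu> \<eta> / \<nu> \<eta>))) \<partial>count_space (set_pmf \<mu>))"
definition Npart :: "'a pmf \<Rightarrow> ('a \<Rightarrow> real) \<Rightarrow> ennreal" where
  "Npart \<mu> \<nu> = (\<integral>\<^sup>+ \<eta>. ennreal (max 0 (- (pmf \<mu> \<eta> * ln (pmf \<mu> \<eta> / \<nu> \<eta>)))) \<partial>count_space (set_pmf \<mu>))"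

lemma rel_entropy_split:
  "(\<forall>\<eta>. pmf \<mu> \<eta> > 0 \<longrightarrow> \<nu> \<eta> > 0) \<Longrightarrow> rel_entropy \<mu> \<nu> = enn2ereal (Ppart \<mu> \<nu>) - enn2ereal (Npart \<mu> \<nu>)"
  by (simp add: rel_entropy_def Ppart_def Npart_def)

lemma rel_entropy_inf:
  "\<not> (\<forall>\<eta>. pmf \<mu> \<eta> > 0 \<longrightarrow> \<nu> \<eta> > 0) \<Longrightarrow> rel_entropy \<mu> \<nu> = \<infinity>"
  unfolding rel_entropy_def by (rule if_not_P)

definition prodd :: "'x set \<Rightarrow> 'k \<Rightarrow> ('x \<Rightarrow> 'k \<Rightarrow> real) \<Rightarrow> ('x \<Rightarrow> 'k) \<Rightarrow> real" where
  "prodd A z p \<eta> = (if \<eta> \<in> {\<eta>. \<forall>x. x \<notin> A \<longrightarrow> \<eta> x = z} then (\<Prod>x\<in>A. p x (\<eta> x)) else 0)"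

lemma pmf_integral_1: "(\<integral>\<^sup>+ \<eta>. ennreal (pmf \<mu> \<eta>) \<partial>count_space (set_pmf \<mu>)) = 1"
  by (simp add: nn_integral_pmf emeasure_pmf)

lemma Npart_le1:
  fixes p :: "'x \<Rightarrow> 'k::countable \<Rightarrow> real"
  assumes A: "finite A" and S: "set_pmf \<mu> \<subseteq> {\<eta>. \<forall>x. x \<notin> A \<longrightarrow> \<eta> x = z}"
    and nn: "\<And>x k. x \<in> A \<Longrightarrow> 0 \<le> p x k"
    and sm: "\<And>x. x \<in> A \<Longrightarrow> p x summable_on UNIV"
    and le: "\<And>x. x \<in> A \<Longrightarrow> infsum (p x) UNIV \<le> 1"
  shows "Npart \<mu> (prodd A z p) \<le> 1"
proof -
  have "Npart \<mu> (prodd A z p) \<le> (\<integral>\<^sup>+ \<eta>. ennreal (\<Prod>x\<in>A. p x (\<eta> x)) \<partial>count_space (set_pmf \<mu>))"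
    unfolding Npart_def
  proof (intro nn_integral_mono ennreal_leI)
    fix \<eta> assume "\<eta> \<in> space (count_space (set_pmf \<mu>))"
    then have e: "\<eta> \<in> set_pmf \<mu>" by simp
    then have m: "pmf \<mu> \<eta> > 0" by (simp add: pmf_positive)
    have pe: "prodd A z p \<eta> = (\<Prod>x\<in>A. p x (\<eta> x))" using S e by (auto simp: prodd_def)
    have "0 \<le> (\<Prod>x\<in>A. p x (\<eta> x))" using nn by (intro prod_nonneg) auto
    then show "max 0 (- (pmf \<mu> \<eta> * ln (pmf \<mu> \<eta> / prodd A z p \<eta>))) \<le> (\<Prod>x\<in>A. p x (\<eta> x))"
      unfolding pe by (intro neg_part_le m)
  qed
  also have "\<dots> \<le> ennreal (\<Prod>x\<in>A. 1)"
    by (rule prod_sum_le[OF A nn sm le S])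
  finally show ?thesis by simp
qed

lemma pow_le_exp_aux:
  fixes L :: real
  assumes "L > 0"
  shows "exp (- (real n * max 0 (ln L))) * L ^ n \<le> 1"
proof -
  have "L ^ n = exp (real n * ln L)" using assms by (simp add: exp_ln ln_realpow[symmetric])
  also have "\<dots> \<le> exp (real n * max 0 (ln L))" by (intro exp_mono mult_left_mono) auto
  finally have "L ^ n \<le> exp (real n * max 0 (ln L))" .
  then have "exp (- (real n * max 0 (ln L))) * L ^ n \<le> exp (- (real n * max 0 (ln L))) * exp (real n * max 0 (ln L))"
    by (intro mult_left_mono) auto
  also have "\<dots> = 1" by (simp add: exp_minus field_simps)
  finally show ?thesis .
qed

lemma Ppart_bound:
  fixes p q :: "'x \<Rightarrow> 'k::countable \<Rightarrow> real" and G :: "'k \<Rightarrow> real"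
  assumes A: "finite A" and S: "set_pmf \<mu> \<subseteq> {\<eta>. \<forall>x. x \<notin> A \<longrightarrow> \<eta> x = z}"
    and pnn: "\<And>x k. x \<in> A \<Longrightarrow> 0 \<le> p x k"
    and qpos: "\<And>x k. x \<in> A \<Longrightarrow> 0 < q x k"
    and rat: "\<And>x k. x \<in> A \<Longrightarrow> p x k \<le> q x k * exp (G k)"
    and g: "\<gamma> > 0" and L: "L > 0"
    and msm: "\<And>x. x \<in> A \<Longrightarrow> (\<lambda>k. p x k * exp (\<gamma> * G k)) summable_on UNIV"
    and mle: "\<And>x. x \<in> A \<Longrightarrow> infsum (\<lambda>k. p x k * exp (\<gamma> * G k)) UNIV \<le> L"
    and ac: "\<forall>\<eta>. pmf \<mu> \<eta> > 0 \<longrightarrow> prodd A z p \<eta> > 0"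
  shows "Ppart \<mu> (prodd A z q) \<le> ennreal (1 + 1/\<gamma>) * Ppart \<mu> (prodd A z p)
           + ennreal ((1 + real (card A) * max 0 (ln L)) / \<gamma>)"
proof -
  define c where "c = real (card A) * max 0 (ln L)"
  have c0: "c \<ge> 0" by (simp add: c_def)
  define M where "M = count_space (set_pmf \<mu>)"
  define F1 where "F1 \<eta> = ennreal (max 0 (pmf \<mu> \<eta> * ln (pmf \<mu> \<eta> / prodd A z p \<eta>)))" for \<eta>
  define F2 where "F2 \<eta> = ennreal (\<Prod>x\<in>A. p x (\<eta> x) * exp (\<gamma> * G (\<eta> x)))" for \<eta>
  have pt: "ennreal (max 0 (pmf \<mu> \<eta> * ln (pmf \<mu> \<eta> / prodd A z q \<eta>)))
      \<le> ennreal (1 + 1/\<gamma>) * F1 \<eta> + ennreal (1/\<gamma> * exp (- c)) * F2 \<eta> + ennreal (c / \<gamma>) * ennreal (pmf \<mu> \<eta>)"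
    if e: "\<eta> \<in> set_pmf \<mu>" for \<eta>
  proof -
    have m: "pmf \<mu> \<eta> > 0" using e by (simp add: pmf_positive)
    have inC: "\<eta> \<in> {\<eta>. \<forall>x. x \<notin> A \<longrightarrow> \<eta> x = z}" using S e by auto
    have pe: "prodd A z p \<eta> = (\<Prod>x\<in>A. p x (\<eta> x))" and qe: "prodd A z q \<eta> = (\<Prod>x\<in>A. q x (\<eta> x))"
      using inC by (auto simp: prodd_def)
    have vp: "prodd A z p \<eta> > 0" using ac m by blast
    have vq: "prodd A z q \<eta> > 0" unfolding qe using qpos by (intro prod_pos) auto
    define Gt where "Gt = (\<Sum>x\<in>A. G (\<eta> x))"
    have "(\<Prod>x\<in>A. p x (\<eta> x)) \<le> (\<Prod>x\<in>A. q x (\<eta> x) * exp (G (\<eta> x)))"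
      using pnn rat by (intro prod_mono) auto
    also have "\<dots> = (\<Prod>x\<in>A. q x (\<eta> x)) * exp Gt" using A by (simp add: prod.distrib exp_sum Gt_def)
    finally have rt: "prodd A z p \<eta> \<le> prodd A z q \<eta> * exp Gt" unfolding pe qe .
    have pr: "prodd A z p \<eta> * exp (\<gamma> * Gt) = (\<Prod>x\<in>A. p x (\<eta> x) * exp (\<gamma> * G (\<eta> x)))"
      unfolding pe Gt_def using A by (simp add: prod.distrib exp_sum sum_distrib_left)
    have b: "max 0 (pmf \<mu> \<eta> * ln (pmf \<mu> \<eta> / prodd A z q \<eta>)) \<le> (1 + 1/\<gamma>) * max 0 (pmf \<mu> \<eta> * ln (pmf \<mu> \<eta> / prodd A z p \<eta>))
           + (1/\<gamma>) * (prodd A z p \<eta> * exp (\<gamma> * Gt) * exp (- c)) + (c / \<gamma>) * pmf \<mu> \<eta>"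
      by (rule pointwise_bound[OF m vp vq rt g c0])
    also have "\<dots> = (1 + 1/\<gamma>) * max 0 (pmf \<mu> \<eta> * ln (pmf \<mu> \<eta> / prodd A z p \<eta>))
           + (1/\<gamma> * exp (- c)) * (\<Prod>x\<in>A. p x (\<eta> x) * exp (\<gamma> * G (\<eta> x))) + (c / \<gamma>) * pmf \<mu> \<eta>"
      unfolding pr[symmetric] by (simp add: mult_ac)
    finally have b': "max 0 (pmf \<mu> \<eta> * ln (pmf \<mu> \<eta> / prodd A z q \<eta>)) \<le> \<dots>" .
    have nn1: "0 \<le> (1 + 1/\<gamma>) * max 0 (pmf \<mu> \<eta> * ln (pmf \<mu> \<eta> / prodd A z p \<eta>))" using g by simp
    have nn2: "0 \<le> (1/\<gamma> * exp (- c)) * (\<Prod>x\<in>A. p x (\<eta> x) * exp (\<gamma> * G (\<eta> x)))"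
      using g pnn by (intro mult_nonneg_nonneg prod_nonneg) auto
    have nn3: "0 \<le> (c / \<gamma>) * pmf \<mu> \<eta>" using g c0 by simp
    have "ennreal (max 0 (pmf \<mu> \<eta> * ln (pmf \<mu> \<eta> / prodd A z q \<eta>))) \<le>
        ennreal ((1 + 1/\<gamma>) * max 0 (pmf \<mu> \<eta> * ln (pmf \<mu> \<eta> / prodd A z p \<eta>))
           + (1/\<gamma> * exp (- c)) * (\<Prod>x\<in>A. p x (\<eta> x) * exp (\<gamma> * G (\<eta> x))) + (c / \<gamma>) * pmf \<mu> \<eta>)"
      using b' by (rule ennreal_leI)
    also have "\<dots> = ennreal ((1 + 1/\<gamma>) * max 0 (pmf \<mu> \<eta> * ln (pmf \<mu> \<eta> / prodd A z p \<eta>))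
           + (1/\<gamma> * exp (- c)) * (\<Prod>x\<in>A. p x (\<eta> x) * exp (\<gamma> * G (\<eta> x))))
           + ennreal ((c / \<gamma>) * pmf \<mu> \<eta>)"
      by (rule ennreal_plus) (use nn1 nn2 nn3 in auto)
    also have "ennreal ((1 + 1/\<gamma>) * max 0 (pmf \<mu> \<eta> * ln (pmf \<mu> \<eta> / prodd A z p \<eta>))
           + (1/\<gamma> * exp (- c)) * (\<Prod>x\<in>A. p x (\<eta> x) * exp (\<gamma> * G (\<eta> x))))
       = ennreal ((1 + 1/\<gamma>) * max 0 (pmf \<mu> \<eta> * ln (pmf \<mu> \<eta> / prodd A z p \<eta>)))
           + ennreal ((1/\<gamma> * exp (- c)) * (\<Prod>x\<in>A. p x (\<eta> x) * exp (\<gamma> * G (\<eta> x))))"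
      by (rule ennreal_plus) (use nn1 nn2 in auto)
    also have "ennreal ((1 + 1/\<gamma>) * max 0 (pmf \<mu> \<eta> * ln (pmf \<mu> \<eta> / prodd A z p \<eta>))) = ennreal (1 + 1/\<gamma>) * F1 \<eta>"
      unfolding F1_def by (rule ennreal_mult) (use g in auto)
    also have "ennreal ((1/\<gamma> * exp (- c)) * (\<Prod>x\<in>A. p x (\<eta> x) * exp (\<gamma> * G (\<eta> x)))) = ennreal (1/\<gamma> * exp (- c)) * F2 \<eta>"
      unfolding F2_def by (rule ennreal_mult) (use g pnn in \<open>auto intro!: prod_nonneg\<close>)
    also have "ennreal ((c / \<gamma>) * pmf \<mu> \<eta>) = ennreal (c / \<gamma>) * ennreal (pmf \<mu> \<eta>)"
      by (rule ennreal_mult) (use g c0 in auto)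
    finally show ?thesis .
  qed
  have "Ppart \<mu> (prodd A z q) \<le> (\<integral>\<^sup>+\<eta>. ennreal (1 + 1/\<gamma>) * F1 \<eta> + ennreal (1/\<gamma> * exp (- c)) * F2 \<eta> + ennreal (c / \<gamma>) * ennreal (pmf \<mu> \<eta>) \<partial>M)"
    unfolding Ppart_def M_def by (intro nn_integral_mono) (use pt in simp)
  also have "\<dots> = ennreal (1 + 1/\<gamma>) * (\<integral>\<^sup>+\<eta>. F1 \<eta> \<partial>M) + ennreal (1/\<gamma> * exp (- c)) * (\<integral>\<^sup>+\<eta>. F2 \<eta> \<partial>M)
        + ennreal (c / \<gamma>) * (\<integral>\<^sup>+\<eta>. ennreal (pmf \<mu> \<eta>) \<partial>M)"
    unfolding M_def by (simp add: nn_integral_add nn_integral_cmult)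
  also have "(\<integral>\<^sup>+\<eta>. F1 \<eta> \<partial>M) = Ppart \<mu> (prodd A z p)" unfolding Ppart_def F1_def M_def ..
  also have "(\<integral>\<^sup>+\<eta>. ennreal (pmf \<mu> \<eta>) \<partial>M) = 1" unfolding M_def by (rule pmf_integral_1)
  also have "(\<integral>\<^sup>+\<eta>. F2 \<eta> \<partial>M) \<le> ennreal (\<Prod>x\<in>A. L)"
    unfolding F2_def M_def
    by (rule prod_sum_le[OF A _ msm mle S]) (use pnn in auto)
  also have "ennreal (\<Prod>x\<in>A. L) = ennreal (L ^ card A)" by simp
  finally have 1: "Ppart \<mu> (prodd A z q) \<le> ennreal (1 + 1/\<gamma>) * Ppart \<mu> (prodd A z p)
       + ennreal (1/\<gamma> * exp (- c)) * ennreal (L ^ card A) + ennreal (c / \<gamma>) * 1"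
    by (simp add: mult_left_mono add_mono)
  have "ennreal (1/\<gamma> * exp (- c)) * ennreal (L ^ card A) = ennreal (1/\<gamma> * (exp (- c) * L ^ card A))"
    using g L by (simp add: ennreal_mult'[symmetric] mult.assoc)
  also have "\<dots> \<le> ennreal (1/\<gamma> * 1)"
    using pow_le_exp_aux[OF L, of "card A"] g by (intro ennreal_leI mult_left_mono) (auto simp: c_def)
  finally have 2: "ennreal (1/\<gamma> * exp (- c)) * ennreal (L ^ card A) \<le> ennreal (1/\<gamma> * 1)" .
  have 3: "ennreal (1/\<gamma> * 1) + ennreal (c / \<gamma>) = ennreal ((1 + c) / \<gamma>)"
    using g c0 by (subst ennreal_plus[symmetric]) (auto simp: add_divide_distrib)
  have 4: "ennreal (1/\<gamma> * exp (- c)) * ennreal (L ^ card A) + ennreal (c / \<gamma>) * 1 \<le> ennreal ((1 + c) / \<gamma>)"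
    using 2 3 by (metis add_right_mono mult_1_right)
  show ?thesis using 1 4 unfolding c_def
    by (smt (verit) add.assoc add_left_mono order_trans)
qed


context
  fixes g1 g2 :: "nat \<times> nat \<Rightarrow> real"
  assumes lj: "local_jump_rate g1 g2"
begin

lemma DR_int_DR: "\<phi> \<in> DR_int g1 g2 \<Longrightarrow> \<phi> \<in> DR g1 g2"
  unfolding DR_int_def by blast

lemma nubar_le_Zterm: "\<phi> \<in> DZ g1 g2 \<Longrightarrow> nubar1 g1 g2 \<phi> k \<le> Zterm g1 g2 \<phi> k"
  unfolding nubar1_def using Z_ge1[OF lj, of \<phi>] Zterm_nonneg[OF lj DZ_Rplus2[OF lj], of \<phi> k]
  by (simp add: divide_le_eq mult_le_cancel_left1)

lemma site_facts:
  fixes \<phi> \<phi>a :: "real \<times> real" and B s M \<gamma> :: real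
  assumes pa: "\<phi>a \<in> DZ g1 g2" "fst \<phi>a > 0" "snd \<phi>a > 0"
    and p: "\<phi> \<in> DZ g1 g2" "fst \<phi> \<le> B * fst \<phi>a" "snd \<phi> \<le> B * snd \<phi>a"
    and B: "B \<ge> 1" and sp: "(s * fst \<phi>, s * snd \<phi>) \<in> DZ g1 g2" "Zfun g1 g2 (s * fst \<phi>, s * snd \<phi>) \<le> M"
    and g: "\<gamma> > 0" "exp (\<gamma> * ln B) \<le> s"
  defines "G \<equiv> \<lambda>k::nat\<times>nat. ln (Zfun g1 g2 \<phi>a) + real (fst k + snd k) * ln B"
  shows "nubar1 g1 g2 \<phi> k \<le> nubar1 g1 g2 \<phi>a k * exp (G k)"
    and "(\<lambda>k. nubar1 g1 g2 \<phi> k * exp (\<gamma> * G k)) summable_on UNIV"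
    and "infsum (\<lambda>k. nubar1 g1 g2 \<phi> k * exp (\<gamma> * G k)) UNIV \<le> exp (\<gamma> * ln (Zfun g1 g2 \<phi>a)) * M"
proof -
  have rp: "fst \<phi> \<ge> 0" "snd \<phi> \<ge> 0" using DZ_Rplus2[OF lj p(1)] by (auto simp: Rplus2_def)
  have Za: "Zfun g1 g2 \<phi>a \<ge> 1" by (rule Z_ge1[OF lj pa(1)])
  have B0: "B > 0" using B by simp
  have expG: "exp (G k) = Zfun g1 g2 \<phi>a * B ^ (fst k + snd k)" for k
  proof -
    have h: "exp (real (fst k + snd k) * ln B) = B ^ (fst k + snd k)"
      using B0 by (subst exp_of_nat_mult) simp
    have h2: "exp (ln (Zfun g1 g2 \<phi>a)) = Zfun g1 g2 \<phi>a" using Za by simp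
    show ?thesis by (simp only: G_def exp_add h h2)
  qed
  show "nubar1 g1 g2 \<phi> k \<le> nubar1 g1 g2 \<phi>a k * exp (G k)"
  proof -
    have "nubar1 g1 g2 \<phi> k \<le> Zterm g1 g2 \<phi> k" by (rule nubar_le_Zterm[OF p(1)])
    also have "\<dots> \<le> Zterm g1 g2 (B * fst \<phi>a, B * snd \<phi>a) k"
      using rp p by (intro Zterm_mono[OF lj]) auto
    also have "\<dots> = B ^ (fst k + snd k) * Zterm g1 g2 \<phi>a k" by (rule Zterm_scale[OF lj])
    also have "\<dots> = nubar1 g1 g2 \<phi>a k * exp (G k)"
      unfolding expG nubar1_def using Za by simp
    finally show ?thesis .
  qed
  have Zp: "Zfun g1 g2 \<phi> \<ge> 1" by (rule Z_ge1[OF lj p(1)])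
  define E where "E = exp (\<gamma> * ln (Zfun g1 g2 \<phi>a))"
  have E0: "E > 0" by (simp add: E_def)
  have bnd: "nubar1 g1 g2 \<phi> k * exp (\<gamma> * G k) \<le> E * Zterm g1 g2 (s * fst \<phi>, s * snd \<phi>) k" for k
  proof -
    have e: "exp (\<gamma> * G k) = E * exp (\<gamma> * ln B) ^ (fst k + snd k)"
      unfolding G_def E_def by (simp add: distrib_left exp_add exp_of_nat_mult[symmetric] mult_ac)
    have "exp (\<gamma> * ln B) ^ (fst k + snd k) \<le> s ^ (fst k + snd k)"
      using g by (intro power_mono) auto
    then have "exp (\<gamma> * G k) \<le> E * s ^ (fst k + snd k)" unfolding e using E0 by simp
    moreover have "nubar1 g1 g2 \<phi> k \<le> Zterm g1 g2 \<phi> k" by (rule nubar_le_Zterm[OF p(1)])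
    moreover have "0 \<le> nubar1 g1 g2 \<phi> k" by (rule nubar_nonneg[OF lj DZ_Rplus2[OF lj p(1)]])
    ultimately have "nubar1 g1 g2 \<phi> k * exp (\<gamma> * G k) \<le> Zterm g1 g2 \<phi> k * (E * s ^ (fst k + snd k))"
      by (intro mult_mono) auto
    also have "\<dots> = E * Zterm g1 g2 (s * fst \<phi>, s * snd \<phi>) k" by (simp add: Zterm_scale[OF lj])
    finally show ?thesis .
  qed
  have nn: "0 \<le> nubar1 g1 g2 \<phi> k * exp (\<gamma> * G k)" for k
    using nubar_nonneg[OF lj DZ_Rplus2[OF lj p(1)]] by simp
  have smE: "(\<lambda>k. E * Zterm g1 g2 (s * fst \<phi>, s * snd \<phi>) k) summable_on UNIV"
    using sp(1) by (intro summable_on_cmult_right) (simp add: DZ_def)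
  show sm: "(\<lambda>k. nubar1 g1 g2 \<phi> k * exp (\<gamma> * G k)) summable_on UNIV"
    by (rule summable_on_comparison_test[OF smE]) (use bnd nn in auto)
  have "infsum (\<lambda>k. nubar1 g1 g2 \<phi> k * exp (\<gamma> * G k)) UNIV \<le> infsum (\<lambda>k. E * Zterm g1 g2 (s * fst \<phi>, s * snd \<phi>) k) UNIV"
    by (rule infsum_mono[OF sm smE bnd])
  also have "\<dots> = E * Zfun g1 g2 (s * fst \<phi>, s * snd \<phi>)" unfolding Zfun_def by (simp add: infsum_cmult_right')
  also have "\<dots> \<le> E * M" using sp(2) E0 by simp
  finally show "infsum (\<lambda>k. nubar1 g1 g2 \<phi> k * exp (\<gamma> * G k)) UNIV \<le> exp (\<gamma> * ln (Zfun g1 g2 \<phi>a)) * M"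
    by (simp add: E_def)
qed

end


lemma sites_eq: "sites N = PiE UNIV (\<lambda>_::'d::finite. {..<N})"
  by (auto simp: sites_def PiE_def Pi_def extensional_def)

lemma finite_sites: "finite (sites N :: ('d::finite \<Rightarrow> nat) set)"
  unfolding sites_eq by (intro finite_PiE) auto

lemma card_sites: "card (sites N :: ('d::finite \<Rightarrow> nat) set) = N ^ CARD('d)"
  unfolding sites_eq by (simp add: card_PiE)

lemma scaled_in_cbox:
  assumes "N \<ge> 1" "x \<in> sites N"
  shows "scaled_site N x \<in> cbox 0 1"
  using assms by (auto simp: mem_box_cart scaled_site_def sites_def divide_le_eq_1 less_imp_le)

lemma nuN_prof_eq: "nuN_prof g1 g2 \<rho> N = prodd (sites N) (0,0) (\<lambda>x. nu1 g1 g2 (\<rho> (scaled_site N x)))"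
  by (intro ext) (simp add: nuN_prof_def prodd_def configs_def)

lemma nuN_const_eq: "nuN_const g1 g2 a N = prodd (sites N) (0,0) (\<lambda>x. nu1 g1 g2 a)"
  by (intro ext) (simp add: nuN_const_def prodd_def configs_def)

lemma ereal_sub_le: "0 \<le> (b::ereal) \<Longrightarrow> a - b \<le> a"
  by (cases a; cases b) auto

lemma ereal_aux:
  assumes "enn2ereal P - enn2ereal Q < ereal r" "Q \<le> 1"
  shows "P \<le> ennreal (r + 1)"
proof -
  obtain q where q: "0 \<le> q" "Q = ennreal q" "q \<le> 1"
    using assms(2) by (cases Q rule: ennreal_cases) (auto simp: ennreal_le_1 top_unique)
  show ?thesis
  proof (cases P rule: ennreal_cases)
    case top
    then show ?thesis using assms(1) q by simp
  next
    case (real p)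
    then have "ereal p - ereal q < ereal r" using assms(1) q by (simp add: enn2ereal_ennreal)
    then have "p < r + 1" using q by simp
    then show ?thesis using real by (simp add: ennreal_leI)
  qed
qed

context
  fixes g1 g2 :: "nat \<times> nat \<Rightarrow> real"
  assumes lj: "local_jump_rate g1 g2"
begin

lemma exists_pos:
  assumes "\<rho>0 \<in> Rfun g1 g2 ` DR_int g1 g2"
  shows "\<exists>a \<in> Rfun g1 g2 ` DR_int g1 g2. fst a > 0 \<and> snd a > 0"
proof -
  obtain \<phi>0 where "\<phi>0 \<in> DR_int g1 g2" using assms by blast
  then obtain U where U: "open U" "\<phi>0 \<in> U" "U \<inter> Rplus2 \<subseteq> DR g1 g2" and p0: "\<phi>0 \<in> Rplus2"
    unfolding DR_int_def by blast
  obtain e where e: "e > 0" "ball \<phi>0 e \<subseteq> U" using U(1,2) open_contains_ball by blast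
  define \<phi>1 where "\<phi>1 = (fst \<phi>0 + e/4, snd \<phi>0 + e/4)"
  have "dist \<phi>0 \<phi>1 \<le> \<bar>e/4\<bar> + \<bar>e/4\<bar>"
    unfolding \<phi>1_def using sqrt_sum_squares_le_sum_abs[of "e/4" "e/4"] e(1)
    by (cases \<phi>0) (simp add: dist_Pair_Pair dist_real_def)
  then have "\<phi>1 \<in> U" using e by auto
  moreover have r1: "\<phi>1 \<in> Rplus2" "fst \<phi>1 > 0" "snd \<phi>1 > 0" using p0 e by (auto simp: \<phi>1_def Rplus2_def)
  ultimately have i1: "\<phi>1 \<in> DR_int g1 g2" using U unfolding DR_int_def by blast
  then have d1: "\<phi>1 \<in> DR g1 g2" by (rule DR_int_DR[OF lj])
  show ?thesis
    using i1 R1_pos[OF lj d1 r1(2)] R2_pos[OF lj d1 r1(3)] by blast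
qed

lemma main_every:
  fixes \<rho> :: "real ^ 'd::finite \<Rightarrow> real \<times> real"
    and \<mu> :: "nat \<Rightarrow> (('d \<Rightarrow> nat) \<Rightarrow> nat \<times> nat) pmf"
  assumes sub: "\<And>N. set_pmf (\<mu> N) \<subseteq> configs N"
    and tp: "torus_profile \<rho>"
    and rng: "range \<rho> \<subseteq> Rfun g1 g2 ` DR_int g1 g2"
    and ele: "entropy_local_equilibrium g1 g2 \<rho> \<mu>"
    and a: "a \<in> Rfun g1 g2 ` DR_int g1 g2" "fst a > 0" "snd a > 0"
  shows "limsup (\<lambda>N. rel_entropy (\<mu> N) (nuN_const g1 g2 a N) / ereal (real N ^ CARD('d))) < \<infinity>"
proof -
  obtain \<phi>a where pai: "\<phi>a \<in> DR_int g1 g2" and aeq: "a = Rfun g1 g2 \<phi>a" using a(1) by blast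
  have paDR: "\<phi>a \<in> DR g1 g2" by (rule DR_int_DR[OF lj pai])
  have paDZ: "\<phi>a \<in> DZ g1 g2" by (rule DR_DZ[OF lj paDR])
  have rpa: "fst \<phi>a \<ge> 0" "snd \<phi>a \<ge> 0" using DZ_Rplus2[OF lj paDZ] by (auto simp: Rplus2_def)
  have pa1: "fst \<phi>a > 0"
  proof (rule ccontr)
    assume "\<not> fst \<phi>a > 0"
    then have "fst \<phi>a = 0" using rpa by simp
    then show False using R1_zero[OF lj paDR] a(2) aeq by simp
  qed
  have pa2: "snd \<phi>a > 0"
  proof (rule ccontr)
    assume "\<not> snd \<phi>a > 0"
    then have "snd \<phi>a = 0" using rpa by simp
    then show False using R2_zero[OF lj paDR] a(3) aeq by simp
  qed
  have Phia: "Phi g1 g2 a = \<phi>a" unfolding aeq by (rule Phi_R[OF lj paDR])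
  define Za where "Za = Zfun g1 g2 \<phi>a"
  have Za1: "Za \<ge> 1" unfolding Za_def by (rule Z_ge1[OF lj paDZ])
  define K where "K = \<rho> ` cbox 0 1"
  have cK: "compact K" unfolding K_def
    using tp unfolding torus_profile_def
    by (intro compact_continuous_image compact_cbox) (auto intro: continuous_on_subset)
  have sK: "K \<subseteq> Rfun g1 g2 ` DR_int g1 g2" unfolding K_def using rng by auto
  obtain s M where s1: "s > 1" and sM: "\<forall>\<phi>\<in>DR g1 g2. Rfun g1 g2 \<phi> \<in> K \<longrightarrow> goodscale g1 g2 s M \<phi>"
    using uniform_bound[OF lj cK sK] by blast
  have Y: "Phi g1 g2 (\<rho> y) \<in> DR g1 g2 \<and> goodscale g1 g2 s M (Phi g1 g2 (\<rho> y))" if y: "y \<in> cbox 0 1" for y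
  proof -
    obtain \<phi> where \<phi>: "\<phi> \<in> DR_int g1 g2" "\<rho> y = Rfun g1 g2 \<phi>" using rng by blast
    have d: "\<phi> \<in> DR g1 g2" by (rule DR_int_DR[OF lj \<phi>(1)])
    have "Phi g1 g2 (\<rho> y) = \<phi>" unfolding \<phi>(2) by (rule Phi_R[OF lj d])
    moreover have "Rfun g1 g2 \<phi> \<in> K" using y \<phi>(2) unfolding K_def by force
    ultimately show ?thesis using d sM by simp
  qed
  have Yb: "Zfun g1 g2 (Phi g1 g2 (\<rho> y)) \<le> M \<and> fst (Phi g1 g2 (\<rho> y)) \<le> M * (g1 (1,0) + g2 (0,1))
       \<and> snd (Phi g1 g2 (\<rho> y)) \<le> M * (g1 (1,0) + g2 (0,1))" if y: "y \<in> cbox 0 1" for y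
  proof -
    define \<phi> where "\<phi> = Phi g1 g2 (\<rho> y)"
    have d: "\<phi> \<in> DR g1 g2" and gs: "goodscale g1 g2 s M \<phi>" using Y[OF y] by (auto simp: \<phi>_def)
    have dz: "\<phi> \<in> DZ g1 g2" by (rule DR_DZ[OF lj d])
    have r: "fst \<phi> \<ge> 0" "snd \<phi> \<ge> 0" using DZ_Rplus2[OF lj dz] by (auto simp: Rplus2_def)
    have "Zfun g1 g2 \<phi> \<le> Zfun g1 g2 (s * fst \<phi>, s * snd \<phi>)"
      using gs r s1 unfolding goodscale_def
      by (intro DZ_mono(2)[OF lj]) (auto intro: mult_right_mono[of 1 s, simplified])
    also have "\<dots> \<le> M" using gs by (simp add: goodscale_def)
    finally have ZM: "Zfun g1 g2 \<phi> \<le> M" .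
    have ga: "g1 (1,0) > 0" "g2 (0,1) > 0" using g1_pos[OF lj, of "(1,0)"] g2_pos[OF lj, of "(0,1)"] by auto
    have "fst \<phi> / g1 (1,0) = Zterm g1 g2 \<phi> (1,0)" unfolding Zterm_def gfact_10[OF lj] by simp
    also have "\<dots> \<le> M" using Z_ge_term[OF lj dz] ZM order_trans by blast
    finally have "fst \<phi> \<le> M * g1 (1,0)" using ga by (simp add: divide_le_eq)
    moreover have "M * g1 (1,0) \<le> M * (g1 (1,0) + g2 (0,1))"
      using ga ZM Z_ge1[OF lj dz] by (intro mult_left_mono) auto
    moreover have "snd \<phi> \<le> M * g2 (0,1)"
    proof -
      have "snd \<phi> / g2 (0,1) = Zterm g1 g2 \<phi> (0,1)" unfolding Zterm_def gfact_01[OF lj] by simp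
      also have "\<dots> \<le> M" using Z_ge_term[OF lj dz] ZM order_trans by blast
      finally show ?thesis using ga by (simp add: divide_le_eq)
    qed
    moreover have "M * g2 (0,1) \<le> M * (g1 (1,0) + g2 (0,1))"
      using ga ZM Z_ge1[OF lj dz] by (intro mult_left_mono) auto
    ultimately show ?thesis using ZM unfolding \<phi>_def by linarith
  qed
  have M1: "M \<ge> 1" using Yb[of 0] Z_ge1[OF lj DR_DZ[OF lj conjunct1[OF Y[of 0]]]] by (simp add: mem_box_cart)
  define Bnd where "Bnd = M * (g1 (1,0) + g2 (0,1))"
  have Bnd0: "Bnd \<ge> 0" unfolding Bnd_def using M1 g1_pos[OF lj, of "(1,0)"] g2_pos[OF lj, of "(0,1)"] by simp
  define B where "B = 1 + Bnd / fst \<phi>a + Bnd / snd \<phi>a"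
  have B1: "B \<ge> 1" unfolding B_def using Bnd0 pa1 pa2 by simp
  have Bf: "Bnd \<le> B * fst \<phi>a"
  proof -
    have "Bnd = (Bnd / fst \<phi>a) * fst \<phi>a" using pa1 by simp
    also have "\<dots> \<le> B * fst \<phi>a" unfolding B_def using pa1 pa2 Bnd0 by (intro mult_right_mono) auto
    finally show ?thesis .
  qed
  have Bs: "Bnd \<le> B * snd \<phi>a"
  proof -
    have "Bnd = (Bnd / snd \<phi>a) * snd \<phi>a" using pa2 by simp
    also have "\<dots> \<le> B * snd \<phi>a" unfolding B_def using pa1 pa2 Bnd0 by (intro mult_right_mono) auto
    finally show ?thesis .
  qed
  define \<gamma> where "\<gamma> = ln s / (ln B + 1)"
  have lB: "ln B \<ge> 0" using B1 by simp
  have ls: "ln s > 0" using s1 by simp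
  have g0: "\<gamma> > 0" unfolding \<gamma>_def using lB ls by simp
  have gB: "exp (\<gamma> * ln B) \<le> s"
  proof -
    have "\<gamma> * ln B = ln s * (ln B / (ln B + 1))" unfolding \<gamma>_def by simp
    also have "\<dots> \<le> ln s * 1" using lB ls by (intro mult_left_mono) auto
    finally show ?thesis using s1 by (metis exp_le_cancel_iff exp_ln less_trans mult_1_right zero_less_one)
  qed
  define G where "G = (\<lambda>k::nat\<times>nat. ln (Zfun g1 g2 \<phi>a) + real (fst k + snd k) * ln B)"
  define L where "L = exp (\<gamma> * ln (Zfun g1 g2 \<phi>a)) * M"
  have L0: "L > 0" unfolding L_def using M1 by simp
  define l where "l = max 0 (ln L)"
  define Cst where "Cst = 2 * (1 + 1/\<gamma>) + (1 + l) / \<gamma>"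
  have ev1: "\<forall>\<^sub>F N in sequentially. rel_entropy (\<mu> N) (nuN_prof g1 g2 \<rho> N) / ereal (real N ^ CARD('d)) < 1"
    using ele unfolding entropy_local_equilibrium_def by (intro Limsup_lessD) simp
  have ev2: "\<forall>\<^sub>F N in sequentially. (1::nat) \<le> N" by (rule eventually_ge_at_top)
  have "\<forall>\<^sub>F N in sequentially. rel_entropy (\<mu> N) (nuN_const g1 g2 a N) / ereal (real N ^ CARD('d)) \<le> ereal Cst"
    using ev1 ev2
  proof eventually_elim
    case (elim N)
    define A where "A = (sites N :: ('d \<Rightarrow> nat) set)"
    have fA: "finite A" unfolding A_def by (rule finite_sites)
    define n where "n = real N ^ CARD('d)"
    have cA: "real (card A) = n" unfolding A_def n_def card_sites by simp
    have n1: "n \<ge> 1" unfolding n_def using elim(2) by simp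
    have S: "set_pmf (\<mu> N) \<subseteq> {\<eta>. \<forall>x. x \<notin> A \<longrightarrow> \<eta> x = (0,0)}" using sub[of N] by (simp add: configs_def A_def)
    define p where "p x = nubar1 g1 g2 (Phi g1 g2 (\<rho> (scaled_site N x)))" for x
    define q where "q (x :: 'd \<Rightarrow> nat) = nubar1 g1 g2 \<phi>a" for x
    have np: "nuN_prof g1 g2 \<rho> N = prodd A (0,0) p" unfolding nuN_prof_eq A_def p_def nu1_def ..
    have nq: "nuN_const g1 g2 a N = prodd A (0,0) q" unfolding nuN_const_eq A_def q_def nu1_def Phia ..
    have Hlt: "rel_entropy (\<mu> N) (nuN_prof g1 g2 \<rho> N) < ereal n"
    proof -
      have "rel_entropy (\<mu> N) (nuN_prof g1 g2 \<rho> N) / ereal n < 1" using elim(1) by (simp add: n_def)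
      moreover have "0 < ereal n" "ereal n < \<infinity>" using n1 by auto
      ultimately have "rel_entropy (\<mu> N) (nuN_prof g1 g2 \<rho> N) < 1 * ereal n"
        using ereal_divide_less_iff by blast
      then show ?thesis by simp
    qed
    have acp: "\<forall>\<eta>. pmf (\<mu> N) \<eta> > 0 \<longrightarrow> prodd A (0,0) p \<eta> > 0"
      using Hlt rel_entropy_inf[of "\<mu> N" "nuN_prof g1 g2 \<rho> N"] np by fastforce
    have site: "x \<in> A \<Longrightarrow> Phi g1 g2 (\<rho> (scaled_site N x)) \<in> DR g1 g2 \<and>
         goodscale g1 g2 s M (Phi g1 g2 (\<rho> (scaled_site N x))) \<and>
         fst (Phi g1 g2 (\<rho> (scaled_site N x))) \<le> Bnd \<and> snd (Phi g1 g2 (\<rho> (scaled_site N x))) \<le> Bnd" for x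
      using Y[OF scaled_in_cbox[OF elim(2)]] Yb[OF scaled_in_cbox[OF elim(2)]] unfolding A_def Bnd_def by blast
    have pnn: "x \<in> A \<Longrightarrow> 0 \<le> p x k" for x k
      unfolding p_def using site[of x] DZ_Rplus2[OF lj DR_DZ[OF lj]] nubar_nonneg[OF lj] by blast
    have psm: "x \<in> A \<Longrightarrow> p x summable_on UNIV" for x
      unfolding p_def using site[of x] nubar_summable[OF lj DR_DZ[OF lj]] by blast
    have ple: "x \<in> A \<Longrightarrow> infsum (p x) UNIV \<le> 1" for x
      unfolding p_def using site[of x] nubar_sum[OF lj DR_DZ[OF lj]] by simp
    have Np: "Npart (\<mu> N) (prodd A (0,0) p) \<le> 1" by (rule Npart_le1[OF fA S pnn psm ple])
    have Pp: "Ppart (\<mu> N) (prodd A (0,0) p) \<le> ennreal (n + 1)"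
      by (rule ereal_aux[OF _ Np]) (use Hlt rel_entropy_split[OF acp] np in simp)
    have sf: "nubar1 g1 g2 (Phi g1 g2 (\<rho> (scaled_site N x))) k \<le> nubar1 g1 g2 \<phi>a k * exp (G k)
       \<and> (\<lambda>k. nubar1 g1 g2 (Phi g1 g2 (\<rho> (scaled_site N x))) k * exp (\<gamma> * G k)) summable_on UNIV
       \<and> infsum (\<lambda>k. nubar1 g1 g2 (Phi g1 g2 (\<rho> (scaled_site N x))) k * exp (\<gamma> * G k)) UNIV \<le> L"
      if x: "x \<in> A" for x k
    proof -
      define \<phi> where "\<phi> = Phi g1 g2 (\<rho> (scaled_site N x))"
      have h: "\<phi> \<in> DR g1 g2" "goodscale g1 g2 s M \<phi>" "fst \<phi> \<le> Bnd" "snd \<phi> \<le> Bnd"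
        using site[OF x] unfolding \<phi>_def by auto
      have dz: "\<phi> \<in> DZ g1 g2" by (rule DR_DZ[OF lj h(1)])
      have f1: "fst \<phi> \<le> B * fst \<phi>a" using h(3) Bf by simp
      have f2: "snd \<phi> \<le> B * snd \<phi>a" using h(4) Bs by simp
      have gs: "(s * fst \<phi>, s * snd \<phi>) \<in> DZ g1 g2" "Zfun g1 g2 (s * fst \<phi>, s * snd \<phi>) \<le> M"
        using h(2) by (auto simp: goodscale_def)
      note F = site_facts[OF lj paDZ pa1 pa2 dz f1 f2 B1 gs g0 gB]
      show ?thesis using F(1)[of k] F(2) F(3) unfolding \<phi>_def[symmetric] G_def L_def by simp
    qed
    have qpos: "x \<in> A \<Longrightarrow> 0 < q x k" for x k
      unfolding q_def using nubar_pos[OF lj paDZ] pa1 pa2 by simp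
    have Pq: "Ppart (\<mu> N) (prodd A (0,0) q) \<le> ennreal (1 + 1/\<gamma>) * Ppart (\<mu> N) (prodd A (0,0) p)
           + ennreal ((1 + real (card A) * max 0 (ln L)) / \<gamma>)"
    proof (rule Ppart_bound[OF fA S pnn qpos _ g0 L0 _ _ acp])
      fix x k assume x: "x \<in> A"
      show "p x k \<le> q x k * exp (G k)" unfolding p_def q_def using sf[of x k, OF x] by (rule conjunct1)
      show "(\<lambda>k. p x k * exp (\<gamma> * G k)) summable_on UNIV" unfolding p_def using sf[of x k, OF x] by (elim conjE)
      show "infsum (\<lambda>k. p x k * exp (\<gamma> * G k)) UNIV \<le> L" unfolding p_def using sf[of x k, OF x] by (elim conjE)
    qed
    also have "\<dots> \<le> ennreal (1 + 1/\<gamma>) * ennreal (n + 1) + ennreal ((1 + n * l) / \<gamma>)"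
      unfolding cA l_def using Pp by (intro add_right_mono mult_left_mono) auto
    also have "\<dots> = ennreal ((1 + 1/\<gamma>) * (n + 1) + (1 + n * l) / \<gamma>)"
      using g0 n1 by (simp add: l_def ennreal_mult'[symmetric] ennreal_plus[symmetric] del: ennreal_plus)
    also have "\<dots> \<le> ennreal (Cst * n)"
    proof (rule ennreal_leI)
      have l0: "l \<ge> 0" by (simp add: l_def)
      have "(1 + 1/\<gamma>) * (n + 1) \<le> (1 + 1/\<gamma>) * (2 * n)" using n1 g0 by (intro mult_left_mono) auto
      moreover have "(1 + n * l) / \<gamma> \<le> (n + n * l) / \<gamma>" using n1 g0 by (intro divide_right_mono) auto
      ultimately have "(1 + 1/\<gamma>) * (n + 1) + (1 + n * l) / \<gamma> \<le> (1 + 1/\<gamma>) * (2 * n) + (n + n * l) / \<gamma>" by simp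
      also have "\<dots> = Cst * n" unfolding Cst_def using g0 by (simp add: field_simps)
      finally show "(1 + 1/\<gamma>) * (n + 1) + (1 + n * l) / \<gamma> \<le> Cst * n" .
    qed
    finally have Pq': "Ppart (\<mu> N) (prodd A (0,0) q) \<le> ennreal (Cst * n)" .
    have acq: "\<forall>\<eta>. pmf (\<mu> N) \<eta> > 0 \<longrightarrow> prodd A (0,0) q \<eta> > 0"
    proof (intro allI impI)
      fix \<eta> assume "pmf (\<mu> N) \<eta> > 0"
      then have "\<eta> \<in> set_pmf (\<mu> N)" by (simp add: set_pmf_iff)
      then have "\<eta> \<in> {\<eta>. \<forall>x. x \<notin> A \<longrightarrow> \<eta> x = (0,0)}" using S by blast
      then show "prodd A (0,0) q \<eta> > 0" unfolding prodd_def using qpos by (simp add: prod_pos)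
    qed
    have Cn: "Cst * n \<ge> 0" unfolding Cst_def using g0 n1 by (simp add: l_def)
    have "rel_entropy (\<mu> N) (nuN_const g1 g2 a N) = enn2ereal (Ppart (\<mu> N) (prodd A (0,0) q)) - enn2ereal (Npart (\<mu> N) (prodd A (0,0) q))"
      unfolding nq by (rule rel_entropy_split[OF acq])
    also have "\<dots> \<le> enn2ereal (Ppart (\<mu> N) (prodd A (0,0) q))" by (rule ereal_sub_le) simp
    also have "\<dots> \<le> enn2ereal (ennreal (Cst * n))" using Pq' by (subst less_eq_ennreal.rep_eq[symmetric])
    also have "\<dots> = ereal (Cst * n)" using Cn by (simp add: enn2ereal_ennreal)
    finally have "rel_entropy (\<mu> N) (nuN_const g1 g2 a N) / ereal n \<le> ereal (Cst * n) / ereal n"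
      using n1 by (intro ereal_divide_right_mono) auto
    also have "\<dots> = ereal Cst" using n1 by simp
    finally show ?case unfolding n_def .
  qed
  then have "limsup (\<lambda>N. rel_entropy (\<mu> N) (nuN_const g1 g2 a N) / ereal (real N ^ CARD('d))) \<le> ereal Cst"
    by (rule Limsup_bounded)
  then show ?thesis by (rule le_less_trans) simp
qed

end


theorem mainTheorem5:
  fixes g1 g2 :: "nat \<times> nat \<Rightarrow> real"
    and \<rho> :: "real ^ 'd::finite \<Rightarrow> real \<times> real"
    and \<mu> :: "nat \<Rightarrow> (('d \<Rightarrow> nat) \<Rightarrow> nat \<times> nat) pmf"
  assumes "local_jump_rate g1 g2"
    and "\<And>N. set_pmf (\<mu> N) \<subseteq> configs N"
    and "torus_profile \<rho>"
    and "range \<rho> \<subseteq> Rfun g1 g2 ` DR_int g1 g2"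
    and "entropy_local_equilibrium g1 g2 \<rho> \<mu>"
  shows "(\<exists>a \<in> Rfun g1 g2 ` DR_int g1 g2. fst a > 0 \<and> snd a > 0 \<and>
            limsup (\<lambda>N. rel_entropy (\<mu> N) (nuN_const g1 g2 a N) / ereal (real N ^ CARD('d))) < \<infinity>)
       \<and> (\<forall>a \<in> Rfun g1 g2 ` DR_int g1 g2. fst a > 0 \<longrightarrow> snd a > 0 \<longrightarrow>
            limsup (\<lambda>N. rel_entropy (\<mu> N) (nuN_const g1 g2 a N) / ereal (real N ^ CARD('d))) < \<infinity>)"
proof -
  have every: "\<forall>a \<in> Rfun g1 g2 ` DR_int g1 g2. fst a > 0 \<longrightarrow> snd a > 0 \<longrightarrow>
            limsup (\<lambda>N. rel_entropy (\<mu> N) (nuN_const g1 g2 a N) / ereal (real N ^ CARD('d))) < \<infinity>"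
    using main_every[OF assms(1) assms(2) assms(3) assms(4) assms(5)] by blast
  have "\<rho> 0 \<in> Rfun g1 g2 ` DR_int g1 g2" using assms(4) by blast
  then obtain a where "a \<in> Rfun g1 g2 ` DR_int g1 g2" "fst a > 0" "snd a > 0"
    using exists_pos[OF assms(1)] by blast
  then show ?thesis using every by blast
qed


end
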